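(* Let $(!, \delta, \varepsilon, \Delta, \mathsf{e}, \mathsf{m},\mathsf{m}_K)$ be a monoidal coalgebra modality on an additive symmetric monoidal category $(\mathbb{X}, \otimes, K)$. Then there exists a natural transformation $\mathsf{S}_A: !(A) \to !(A)$ such that for each object $A$, $(!(A), \nabla_A, \mathsf{u}_A, \Delta_A, \mathsf{e}_A, \mathsf{S}_A)$ is a cocommutative Hopf monoid if and only if $(\mathbb{X}, \otimes, K)$ is enriched over abelian groups (i.e. has negatives: every map $f$ has an additive inverse $-f$ with $f+(-f)=0$).
   Context: Composition is in diagrammatic order; $\ell,\rho$ are the unitors. An additive symmetric monoidal category is a symmetric monoidal category whose hom-sets are commutative monoids ($+$, $0$), with composition and $\otimes$ preserving sums and zeros in each argument. A monoidal coalgebra modality is a symmetric monoidal comonad $(!,\delta,\varepsilon,\mathsf{m},\mathsf{m}_K)$ ($\mathsf{m}_{A,B}:!(A)\otimes!(B)\to!(A\otimes B)$, $\mathsf{m}_K:K\to!(K)$) with natural cocommutative comonoids $(!(A),\Delta_A,\mathsf{e}_A)$ such that $\delta_A$ is a comonoid morphism and $\Delta,\mathsf{e}$ are monoidal transformations and $!$-coalgebra morphisms. Here $\nabla_A := (\delta_A\otimes\delta_A);\mathsf{m}_{!(A),!(A)};!\big(((\varepsilon_A\otimes\mathsf{e}_A);\rho_A)+((\mathsf{e}_A\otimes\varepsilon_A);\ell_A)\big)$ and $\mathsf{u}_A:=\mathsf{m}_K;!(0_{K,A})$, which make $(!(A),\nabla_A,\mathsf{u}_A,\Delta_A,\mathsf{e}_A)$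 a commutative and cocommutative bimonoid. A Hopf monoid is a bimonoid with antipode $\mathsf{S}$ satisfying $\Delta;(1\otimes\mathsf{S});\nabla=\mathsf{e};\mathsf{u}=\Delta;(\mathsf{S}\otimes1);\nabla$. *)

theory Defs
  imports Main
begin

text \<open>A category is presented with a type of objects 'o (every element of 'o is an
object), a set of arrows, domain/codomain maps, composition in DIAGRAMMATIC order
(cmp f g = f;g), and identities.\<close>

record ('o,'m) asmc =
  Arr :: "'m set"
  Dom :: "'m \<Rightarrow> 'o"
  Cod :: "'m \<Rightarrow> 'o"
  cmp :: "'m \<Rightarrow> 'm \<Rightarrow> 'm"
  idt :: "'o \<Rightarrow> 'm"
  ten :: "'o \<Rightarrow> 'o \<Rightarrow> 'o"
  tenm :: "'m \<Rightarrow> 'm \<Rightarrow> 'm"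
  unitK :: 'o
  asc :: "'o \<Rightarrow> 'o \<Rightarrow> 'o \<Rightarrow> 'm"   (* (A\<otimes>B)\<otimes>C \<rightarrow> A\<otimes>(B\<otimes>C) *)
  lu :: "'o \<Rightarrow> 'm"
  ru :: "'o \<Rightarrow> 'm"
  symm :: "'o \<Rightarrow> 'o \<Rightarrow> 'm"
  addm :: "'m \<Rightarrow> 'm \<Rightarrow> 'm"
  zerm :: "'o \<Rightarrow> 'o \<Rightarrow> 'm"

definition hom :: "('o,'m,'x) asmc_scheme \<Rightarrow> 'o \<Rightarrow> 'o \<Rightarrow> 'm set" where
  "hom C A B = {f \<in> Arr C. Dom C f = A \<and> Cod C f = B}"

definition is_iso :: "('o,'m,'x) asmc_scheme \<Rightarrow> 'm \<Rightarrow> 'o \<Rightarrow> 'o \<Rightarrow> bool" where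
  "is_iso C f A B \<longleftrightarrow> f \<in> hom C A B \<and>
     (\<exists>g \<in> hom C B A. cmp C f g = idt C A \<and> cmp C g f = idt C B)"

definition cinv :: "('o,'m,'x) asmc_scheme \<Rightarrow> 'm \<Rightarrow> 'm" where
  "cinv C f = (THE g. g \<in> hom C (Cod C f) (Dom C f) \<and>
       cmp C f g = idt C (Dom C f) \<and> cmp C g f = idt C (Cod C f))"

context
  fixes C :: "('o,'m,'x) asmc_scheme"
begin

abbreviation (input) cmpC (infixl ";;" 55) where "f ;; g \<equiv> cmp C f g"
abbreviation (input) tenC (infixr "\<otimes>" 70) where "A \<otimes> B \<equiv> ten C A B"
abbreviation (input) tenmC (infixr "\<otimes>\<^sub>m" 70) where "f \<otimes>\<^sub>m g \<equiv> tenm C f g"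
abbreviation (input) addC (infixl "+\<^sub>m" 65) where "f +\<^sub>m g \<equiv> addm C f g"
abbreviation (input) KC where "KC \<equiv> unitK C"
abbreviation (input) iC where "iC \<equiv> idt C"
abbreviation (input) zC where "zC \<equiv> zerm C"

definition category :: bool where
  "category \<longleftrightarrow>
    (\<forall>A. idt C A \<in> hom C A A) \<and>
    (\<forall>A B D f g. f \<in> hom C A B \<longrightarrow> g \<in> hom C B D \<longrightarrow> cmp C f g \<in> hom C A D) \<and>
    (\<forall>A B f. f \<in> hom C A B \<longrightarrow> cmp C (idt C A) f = f \<and> cmp C f (idt C B) = f) \<and>
    (\<forall>A B D E f g h. f \<in> hom C A B \<longrightarrow> g \<in> hom C B D \<longrightarrow> h \<in> hom C D E \<longrightarrow>
        cmp C (cmp C f g) h = cmp C f (cmp C g h))"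

definition symmetric_monoidal :: bool where
  "symmetric_monoidal \<longleftrightarrow>
    (
    \<comment> \<open>tensor is a bifunctor\<close>
    (\<forall>A B D E f g. f \<in> hom C A B \<longrightarrow> g \<in> hom C D E \<longrightarrow> (f \<otimes>\<^sub>m g) \<in> hom C (A \<otimes> D) (B \<otimes> E)) \<and>
    (\<forall>A B. (iC A \<otimes>\<^sub>m iC B) = iC (A \<otimes> B)) \<and>
    (\<forall>A B B' D E E' f f' g g'. f \<in> hom C A B \<longrightarrow> f' \<in> hom C B B' \<longrightarrow>
        g \<in> hom C D E \<longrightarrow> g' \<in> hom C E E' \<longrightarrow>
        ((f ;; f') \<otimes>\<^sub>m (g ;; g')) = ((f \<otimes>\<^sub>m g) ;; (f' \<otimes>\<^sub>m g'))) \<and>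
    \<comment> \<open>structure isomorphisms\<close>
    (\<forall>A B D. is_iso C (asc C A B D) ((A \<otimes> B) \<otimes> D) (A \<otimes> (B \<otimes> D))) \<and>
    (\<forall>A. is_iso C (lu C A) (KC \<otimes> A) A) \<and>
    (\<forall>A. is_iso C (ru C A) (A \<otimes> KC) A) \<and>
    (\<forall>A B. symm C A B \<in> hom C (A \<otimes> B) (B \<otimes> A)) \<and>
    (\<forall>A B. (symm C A B ;; symm C B A) = iC (A \<otimes> B)) \<and>
    \<comment> \<open>naturality\<close>
    (\<forall>A A' B B' D D' f g h. f \<in> hom C A A' \<longrightarrow> g \<in> hom C B B' \<longrightarrow> h \<in> hom C D D' \<longrightarrow>
        (((f \<otimes>\<^sub>m g) \<otimes>\<^sub>m h) ;; asc C A' B' D') = (asc C A B D ;; (f \<otimes>\<^sub>m (g \<otimes>\<^sub>m h)))) \<and>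
    (\<forall>A B f. f \<in> hom C A B \<longrightarrow> ((iC KC \<otimes>\<^sub>m f) ;; lu C B) = (lu C A ;; f)) \<and>
    (\<forall>A B f. f \<in> hom C A B \<longrightarrow> ((f \<otimes>\<^sub>m iC KC) ;; ru C B) = (ru C A ;; f)) \<and>
    (\<forall>A B D E f g. f \<in> hom C A B \<longrightarrow> g \<in> hom C D E \<longrightarrow>
        ((f \<otimes>\<^sub>m g) ;; symm C B E) = (symm C A D ;; (g \<otimes>\<^sub>m f))) \<and>
    \<comment> \<open>pentagon, triangle, hexagon\<close>
    (\<forall>A B D E. (asc C (A \<otimes> B) D E ;; asc C A B (D \<otimes> E)) =
        ((asc C A B D \<otimes>\<^sub>m iC E) ;; asc C A (B \<otimes> D) E ;; (iC A \<otimes>\<^sub>m asc C B D E))) \<and>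
    (\<forall>A B. (asc C A KC B ;; (iC A \<otimes>\<^sub>m lu C B)) = (ru C A \<otimes>\<^sub>m iC B)) \<and>
    (\<forall>A B D. (asc C A B D ;; symm C A (B \<otimes> D) ;; asc C B D A) =
        ((symm C A B \<otimes>\<^sub>m iC D) ;; asc C B A D ;; (iC B \<otimes>\<^sub>m symm C A D))))"

definition additive :: bool where
  "additive \<longleftrightarrow>
    (
    (\<forall>A B. zC A B \<in> hom C A B) \<and>
    (\<forall>A B f g. f \<in> hom C A B \<longrightarrow> g \<in> hom C A B \<longrightarrow> (f +\<^sub>m g) \<in> hom C A B) \<and>
    (\<forall>A B f g h. f \<in> hom C A B \<longrightarrow> g \<in> hom C A B \<longrightarrow> h \<in> hom C A B \<longrightarrow>
        ((f +\<^sub>m g) +\<^sub>m h) = (f +\<^sub>m (g +\<^sub>m h))) \<and>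
    (\<forall>A B f g. f \<in> hom C A B \<longrightarrow> g \<in> hom C A B \<longrightarrow> (f +\<^sub>m g) = (g +\<^sub>m f)) \<and>
    (\<forall>A B f. f \<in> hom C A B \<longrightarrow> (f +\<^sub>m zC A B) = f) \<and>
    \<comment> \<open>composition preserves sums and zeros in each argument\<close>
    (\<forall>A B D f g h. f \<in> hom C A B \<longrightarrow> g \<in> hom C B D \<longrightarrow> h \<in> hom C B D \<longrightarrow>
        (f ;; (g +\<^sub>m h)) = ((f ;; g) +\<^sub>m (f ;; h))) \<and>
    (\<forall>A B D f g h. f \<in> hom C A B \<longrightarrow> g \<in> hom C A B \<longrightarrow> h \<in> hom C B D \<longrightarrow>
        ((f +\<^sub>m g) ;; h) = ((f ;; h) +\<^sub>m (g ;; h))) \<and>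
    (\<forall>A B D f. f \<in> hom C A B \<longrightarrow> (f ;; zC B D) = zC A D) \<and>
    (\<forall>A B D f. f \<in> hom C B D \<longrightarrow> (zC A B ;; f) = zC A D) \<and>
    \<comment> \<open>tensor preserves sums and zeros in each argument\<close>
    (\<forall>A B D E f g h. f \<in> hom C A B \<longrightarrow> g \<in> hom C D E \<longrightarrow> h \<in> hom C D E \<longrightarrow>
        (f \<otimes>\<^sub>m (g +\<^sub>m h)) = ((f \<otimes>\<^sub>m g) +\<^sub>m (f \<otimes>\<^sub>m h))) \<and>
    (\<forall>A B D E f g h. f \<in> hom C A B \<longrightarrow> g \<in> hom C A B \<longrightarrow> h \<in> hom C D E \<longrightarrow>
        ((f +\<^sub>m g) \<otimes>\<^sub>m h) = ((f \<otimes>\<^sub>m h) +\<^sub>m (g \<otimes>\<^sub>m h))) \<and>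
    (\<forall>A B D E f. f \<in> hom C A B \<longrightarrow> (f \<otimes>\<^sub>m zC D E) = zC (A \<otimes> D) (B \<otimes> E)) \<and>
    (\<forall>A B D E f. f \<in> hom C D E \<longrightarrow> (zC A B \<otimes>\<^sub>m f) = zC (A \<otimes> D) (B \<otimes> E)))"

definition additive_smc :: bool where
  "additive_smc \<longleftrightarrow> category \<and> symmetric_monoidal \<and> additive"

definition interchange :: "'o \<Rightarrow> 'o \<Rightarrow> 'o \<Rightarrow> 'o \<Rightarrow> 'm" where
  "interchange W X Y Z =
     (
      asc C W X (Y \<otimes> Z) ;; (iC W \<otimes>\<^sub>m cinv C (asc C X Y Z)) ;;
      (iC W \<otimes>\<^sub>m (symm C X Y \<otimes>\<^sub>m iC Z)) ;; (iC W \<otimes>\<^sub>m asc C Y X Z) ;;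
      cinv C (asc C W Y (X \<otimes> Z)))"

definition bimonoid :: "'o \<Rightarrow> 'm \<Rightarrow> 'm \<Rightarrow> 'm \<Rightarrow> 'm \<Rightarrow> bool" where
  "bimonoid X mu u d e \<longleftrightarrow>
    (
    mu \<in> hom C (X \<otimes> X) X \<and> u \<in> hom C KC X \<and> d \<in> hom C X (X \<otimes> X) \<and> e \<in> hom C X KC \<and>
    \<comment> \<open>monoid\<close>
    ((mu \<otimes>\<^sub>m iC X) ;; mu) = (asc C X X X ;; (iC X \<otimes>\<^sub>m mu) ;; mu) \<and>
    ((u \<otimes>\<^sub>m iC X) ;; mu) = lu C X \<and>
    ((iC X \<otimes>\<^sub>m u) ;; mu) = ru C X \<and>
    \<comment> \<open>comonoid\<close>
    (d ;; (d \<otimes>\<^sub>m iC X) ;; asc C X X X) = (d ;; (iC X \<otimes>\<^sub>m d)) \<and>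
    (d ;; (e \<otimes>\<^sub>m iC X) ;; lu C X) = iC X \<and>
    (d ;; (iC X \<otimes>\<^sub>m e) ;; ru C X) = iC X \<and>
    \<comment> \<open>compatibility\<close>
    (mu ;; d) = ((d \<otimes>\<^sub>m d) ;; interchange X X X X ;; (mu \<otimes>\<^sub>m mu)) \<and>
    (u ;; d) = (cinv C (ru C KC) ;; (u \<otimes>\<^sub>m u)) \<and>
    (mu ;; e) = ((e \<otimes>\<^sub>m e) ;; lu C KC) \<and>
    (u ;; e) = iC KC)"

definition hopf_monoid :: "'o \<Rightarrow> 'm \<Rightarrow> 'm \<Rightarrow> 'm \<Rightarrow> 'm \<Rightarrow> 'm \<Rightarrow> bool" where
  "hopf_monoid X mu u d e S \<longleftrightarrow>
    bimonoid X mu u d e \<and> S \<in> hom C X X \<and>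
    cmp C (cmp C d (tenm C (idt C X) S)) mu = cmp C e u \<and>
    cmp C (cmp C d (tenm C S (idt C X))) mu = cmp C e u"

definition cocommutative_hopf_monoid ::
  "'o \<Rightarrow> 'm \<Rightarrow> 'm \<Rightarrow> 'm \<Rightarrow> 'm \<Rightarrow> 'm \<Rightarrow> bool" where
  "cocommutative_hopf_monoid X mu u d e S \<longleftrightarrow>
    hopf_monoid X mu u d e S \<and> cmp C d (symm C X X) = d"

end

definition has_negatives :: "('o,'m,'x) asmc_scheme \<Rightarrow> bool" where
  "has_negatives C \<longleftrightarrow>
    (\<forall>A B. \<forall>f \<in> hom C A B. \<exists>g \<in> hom C A B. addm C f g = zerm C A B)"

record ('o,'m) mcm =
  bang :: "'o \<Rightarrow> 'o"
  bangm :: "'m \<Rightarrow> 'm"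
  dlt :: "'o \<Rightarrow> 'm"
  eps :: "'o \<Rightarrow> 'm"
  mon :: "'o \<Rightarrow> 'o \<Rightarrow> 'm"    (* !A\<otimes>!B \<rightarrow> !(A\<otimes>B) *)
  monK :: 'm
  cop :: "'o \<Rightarrow> 'm"
  cou :: "'o \<Rightarrow> 'm"

context
  fixes C :: "('o,'m,'x) asmc_scheme" and M :: "('o,'m,'y) mcm_scheme"
begin

abbreviation (input) cmpC' (infixl ";;" 55) where "f ;; g \<equiv> cmp C f g"
abbreviation (input) tenC' (infixr "\<otimes>" 70) where "A \<otimes> B \<equiv> ten C A B"
abbreviation (input) tenmC' (infixr "\<otimes>\<^sub>m" 70) where "f \<otimes>\<^sub>m g \<equiv> tenm C f g"
abbreviation (input) KC' where "KC' \<equiv> unitK C"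
abbreviation (input) iC' where "iC' \<equiv> idt C"
abbreviation (input) bM where "bM \<equiv> bang M"
abbreviation (input) bmM where "bmM \<equiv> bangm M"
abbreviation (input) dM where "dM \<equiv> dlt M"
abbreviation (input) epsM where "epsM \<equiv> eps M"
abbreviation (input) mM where "mM \<equiv> mon M"
abbreviation (input) mKM where "mKM \<equiv> monK M"
abbreviation (input) DM where "DM \<equiv> cop M"
abbreviation (input) eM where "eM \<equiv> cou M"

definition monoidal_coalgebra_modality ::
  bool where
  "monoidal_coalgebra_modality \<longleftrightarrow>
    (
    \<comment> \<open>! is a functor\<close>
    (\<forall>A B f. f \<in> hom C A B \<longrightarrow> bmM f \<in> hom C (bM A) (bM B)) \<and>
    (\<forall>A. bmM (iC' A) = iC' (bM A)) \<and>
    (\<forall>A B D f g. f \<in> hom C A B \<longrightarrow> g \<in> hom C B D \<longrightarrow> bmM (f ;; g) = (bmM f ;; bmM g)) \<and>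
    \<comment> \<open>comonad\<close>
    (\<forall>A. dM A \<in> hom C (bM A) (bM (bM A)) \<and> epsM A \<in> hom C (bM A) A) \<and>
    (\<forall>A B f. f \<in> hom C A B \<longrightarrow> (bmM f ;; dM B) = (dM A ;; bmM (bmM f))) \<and>
    (\<forall>A B f. f \<in> hom C A B \<longrightarrow> (bmM f ;; epsM B) = (epsM A ;; f)) \<and>
    (\<forall>A. (dM A ;; epsM (bM A)) = iC' (bM A)) \<and>
    (\<forall>A. (dM A ;; bmM (epsM A)) = iC' (bM A)) \<and>
    (\<forall>A. (dM A ;; dM (bM A)) = (dM A ;; bmM (dM A))) \<and>
    \<comment> \<open>symmetric (lax) monoidal functor structure\<close>
    (\<forall>A B. mM A B \<in> hom C (bM A \<otimes> bM B) (bM (A \<otimes> B))) \<and>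
    mKM \<in> hom C KC' (bM KC') \<and>
    (\<forall>A B D E f g. f \<in> hom C A B \<longrightarrow> g \<in> hom C D E \<longrightarrow>
        ((bmM f \<otimes>\<^sub>m bmM g) ;; mM B E) = (mM A D ;; bmM (f \<otimes>\<^sub>m g))) \<and>
    (\<forall>A B D. (asc C (bM A) (bM B) (bM D) ;; (iC' (bM A) \<otimes>\<^sub>m mM B D) ;; mM A (B \<otimes> D)) =
        ((mM A B \<otimes>\<^sub>m iC' (bM D)) ;; mM (A \<otimes> B) D ;; bmM (asc C A B D))) \<and>
    (\<forall>A. ((mKM \<otimes>\<^sub>m iC' (bM A)) ;; mM KC' A ;; bmM (lu C A)) = lu C (bM A)) \<and>
    (\<forall>A. ((iC' (bM A) \<otimes>\<^sub>m mKM) ;; mM A KC' ;; bmM (ru C A)) = ru C (bM A)) \<and>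
    (\<forall>A B. (symm C (bM A) (bM B) ;; mM B A) = (mM A B ;; bmM (symm C A B))) \<and>
    \<comment> \<open>dM and epsM are monoidal transformations\<close>
    (\<forall>A B. (mM A B ;; epsM (A \<otimes> B)) = (epsM A \<otimes>\<^sub>m epsM B)) \<and>
    (mKM ;; epsM KC') = iC' KC' \<and>
    (\<forall>A B. (mM A B ;; dM (A \<otimes> B)) = ((dM A \<otimes>\<^sub>m dM B) ;; mM (bM A) (bM B) ;; bmM (mM A B))) \<and>
    (mKM ;; dM KC') = (mKM ;; bmM mKM) \<and>
    \<comment> \<open>natural cocommutative comonoids\<close>
    (\<forall>A. DM A \<in> hom C (bM A) (bM A \<otimes> bM A) \<and> eM A \<in> hom C (bM A) KC') \<and>
    (\<forall>A. (DM A ;; (DM A \<otimes>\<^sub>m iC' (bM A)) ;; asc C (bM A) (bM A) (bM A)) = (DM A ;; (iC' (bM A) \<otimes>\<^sub>m DM A))) \<and>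
    (\<forall>A. (DM A ;; (eM A \<otimes>\<^sub>m iC' (bM A)) ;; lu C (bM A)) = iC' (bM A)) \<and>
    (\<forall>A. (DM A ;; (iC' (bM A) \<otimes>\<^sub>m eM A) ;; ru C (bM A)) = iC' (bM A)) \<and>
    (\<forall>A. (DM A ;; symm C (bM A) (bM A)) = DM A) \<and>
    (\<forall>A B f. f \<in> hom C A B \<longrightarrow> (bmM f ;; DM B) = (DM A ;; (bmM f \<otimes>\<^sub>m bmM f))) \<and>
    (\<forall>A B f. f \<in> hom C A B \<longrightarrow> (bmM f ;; eM B) = eM A) \<and>
    \<comment> \<open>dM is a comonoid morphism\<close>
    (\<forall>A. (dM A ;; DM (bM A)) = (DM A ;; (dM A \<otimes>\<^sub>m dM A))) \<and>
    (\<forall>A. (dM A ;; eM (bM A)) = eM A) \<and>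
    \<comment> \<open>DM and eM are monoidal transformations\<close>
    (\<forall>A B. (mM A B ;; DM (A \<otimes> B)) =
        ((DM A \<otimes>\<^sub>m DM B) ;; interchange C (bM A) (bM A) (bM B) (bM B) ;; (mM A B \<otimes>\<^sub>m mM A B))) \<and>
    (mKM ;; DM KC') = (cinv C (ru C KC') ;; (mKM \<otimes>\<^sub>m mKM)) \<and>
    (\<forall>A B. (mM A B ;; eM (A \<otimes> B)) = ((eM A \<otimes>\<^sub>m eM B) ;; lu C KC')) \<and>
    (mKM ;; eM KC') = iC' KC' \<and>
    \<comment> \<open>DM and eM are !-coalgebra morphisms\<close>
    (\<forall>A. (dM A ;; bmM (DM A)) = (DM A ;; (dM A \<otimes>\<^sub>m dM A) ;; mM (bM A) (bM A))) \<and>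
    (\<forall>A. (dM A ;; bmM (eM A)) = (eM A ;; mKM)))"

definition nabla :: "'o \<Rightarrow> 'm" where
  "nabla A =
    (
     (dlt M A \<otimes>\<^sub>m dlt M A) ;; mon M (bang M A) (bang M A) ;;
     bangm M (addm C ((eps M A \<otimes>\<^sub>m cou M A) ;; ru C A) ((cou M A \<otimes>\<^sub>m eps M A) ;; lu C A)))"

definition unitm :: "'o \<Rightarrow> 'm" where
  "unitm A = cmp C (monK M) (bangm M (zerm C (unitK C) A))"

end

end

theory Submission
  imports Defs
begin


locale amc =
  fixes C :: "('o,'m) asmc" and M :: "('o,'m) mcm"
  assumes asmc: "additive_smc C" and mcm: "monoidal_coalgebra_modality C M"
begin

abbreviation arr where "arr f \<equiv> f \<in> Arr C"
abbreviation dm where "dm f \<equiv> Dom C f"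
abbreviation cd where "cd f \<equiv> Cod C f"
abbreviation cm (infixl "\<cdot>" 55) where "f \<cdot> g \<equiv> cmp C f g"
abbreviation tm (infixr "\<otimes>" 70) where "f \<otimes> g \<equiv> tenm C f g"
abbreviation to (infixr "\<odot>" 70) where "A \<odot> B \<equiv> ten C A B"
abbreviation ad (infixl "\<oplus>" 65) where "f \<oplus> g \<equiv> addm C f g"
abbreviation K where "K \<equiv> unitK C"
abbreviation ii where "ii \<equiv> idt C"
abbreviation z where "z \<equiv> zerm C"
abbreviation bo where "bo \<equiv> bang M"
abbreviation bm where "bm \<equiv> bangm M"
abbreviation dl where "dl \<equiv> dlt M"
abbreviation ep where "ep \<equiv> eps M"
abbreviation mm where "mm \<equiv> mon M"
abbreviation mK where "mK \<equiv> monK M"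
abbreviation D where "D \<equiv> cop M"
abbreviation ee where "ee \<equiv> cou M"
abbreviation as where "as \<equiv> asc C"
abbreviation lu' where "lu' \<equiv> lu C"
abbreviation ru' where "ru' \<equiv> ru C"
abbreviation sy where "sy \<equiv> symm C"
abbreviation iv where "iv \<equiv> cinv C"

lemma cat: "category C" and smc: "symmetric_monoidal C" and add: "additive C"
  using asmc by (auto simp: additive_smc_def)

lemma hom_iff: "f \<in> hom C A B \<longleftrightarrow> arr f \<and> dm f = A \<and> cd f = B"
  by (auto simp: hom_def)


lemma cat_typ:
  "\<And>A. arr (ii A) \<and> dm (ii A) = A \<and> cd (ii A) = A"
  "\<And>f g. arr f \<Longrightarrow> arr g \<Longrightarrow> cd f = dm g \<Longrightarrow> arr (f\<cdot>g) \<and> dm (f\<cdot>g) = dm f \<and> cd (f\<cdot>g) = cd g"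
  using cat unfolding category_def hom_def by blast+

lemma arr_id[simp]: "arr (ii A)" and dm_id[simp]: "dm (ii A) = A" and cd_id[simp]: "cd (ii A) = A"
  using cat_typ by auto
lemma arr_cmp[simp]: "arr f \<Longrightarrow> arr g \<Longrightarrow> cd f = dm g \<Longrightarrow> arr (f\<cdot>g)"
  and dm_cmp[simp]: "arr f \<Longrightarrow> arr g \<Longrightarrow> cd f = dm g \<Longrightarrow> dm (f\<cdot>g) = dm f"
  and cd_cmp[simp]: "arr f \<Longrightarrow> arr g \<Longrightarrow> cd f = dm g \<Longrightarrow> cd (f\<cdot>g) = cd g"
  using cat_typ by auto

lemma idl[simp]: "arr f \<Longrightarrow> dm f = A \<Longrightarrow> ii A \<cdot> f = f"
  and idr[simp]: "arr f \<Longrightarrow> cd f = A \<Longrightarrow> f \<cdot> ii A = f"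
  using cat unfolding category_def hom_def by blast+

lemma assoc: "arr f \<Longrightarrow> arr g \<Longrightarrow> arr h \<Longrightarrow> cd f = dm g \<Longrightarrow> cd g = dm h \<Longrightarrow>
   (f \<cdot> g) \<cdot> h = f \<cdot> (g \<cdot> h)"
  using cat unfolding category_def hom_def by blast

lemma iso_inv:
  assumes "is_iso C f A B"
  shows "arr (iv f) \<and> dm (iv f) = B \<and> cd (iv f) = A \<and> f \<cdot> iv f = ii A \<and> iv f \<cdot> f = ii B"
proof -
  obtain g where g: "g \<in> hom C B A" "f \<cdot> g = ii A" "g \<cdot> f = ii B" and f: "f \<in> hom C A B"
    using assms unfolding is_iso_def by blast
  have u: "g' = g" if "g' \<in> hom C B A" "f \<cdot> g' = ii A" "g' \<cdot> f = ii B" for g'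
  proof -
    have "g' = g' \<cdot> ii A" using that(1) by (simp add: hom_iff)
    also have "\<dots> = g' \<cdot> (f \<cdot> g)" by (simp only: g(2))
    also have "\<dots> = (g' \<cdot> f) \<cdot> g" using that g f by (intro assoc[symmetric]) (auto simp: hom_iff)
    also have "\<dots> = ii B \<cdot> g" using that by simp
    also have "\<dots> = g" using g by (simp add: hom_iff)
    finally show ?thesis .
  qed
  have fd: "dm f = A" "cd f = B" using f by (auto simp: hom_iff)
  have "iv f = g" unfolding cinv_def fd
  proof (rule the_equality)
    show "g \<in> hom C B A \<and> f \<cdot> g = ii A \<and> g \<cdot> f = ii B" using g by blast
  next
    fix g' assume "g' \<in> hom C B A \<and> f \<cdot> g' = ii A \<and> g' \<cdot> f = ii B"
    then show "g' = g" using u by blast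
  qed
  then show ?thesis using g by (simp add: hom_iff)
qed

lemmas S0 = smc[unfolded symmetric_monoidal_def, THEN conjunct1]
lemmas S1 = smc[unfolded symmetric_monoidal_def, THEN conjunct2, THEN conjunct1]
lemmas S2 = smc[unfolded symmetric_monoidal_def, THEN conjunct2, THEN conjunct2, THEN conjunct1]
lemmas S3 = smc[unfolded symmetric_monoidal_def, THEN conjunct2, THEN conjunct2, THEN conjunct2, THEN conjunct1]
lemmas S4 = smc[unfolded symmetric_monoidal_def, THEN conjunct2, THEN conjunct2, THEN conjunct2, THEN conjunct2, THEN conjunct1]
lemmas S5 = smc[unfolded symmetric_monoidal_def, THEN conjunct2, THEN conjunct2, THEN conjunct2, THEN conjunct2, THEN conjunct2, THEN conjunct1]
lemmas S6 = smc[unfolded symmetric_monoidal_def, THEN conjunct2, THEN conjunct2, THEN conjunct2, THEN conjunct2, THEN conjunct2, THEN conjunct2, THEN conjunct1]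
lemmas S7 = smc[unfolded symmetric_monoidal_def, THEN conjunct2, THEN conjunct2, THEN conjunct2, THEN conjunct2, THEN conjunct2, THEN conjunct2, THEN conjunct2, THEN conjunct1]
lemmas S8 = smc[unfolded symmetric_monoidal_def, THEN conjunct2, THEN conjunct2, THEN conjunct2, THEN conjunct2, THEN conjunct2, THEN conjunct2, THEN conjunct2, THEN conjunct2, THEN conjunct1]
lemmas S9 = smc[unfolded symmetric_monoidal_def, THEN conjunct2, THEN conjunct2, THEN conjunct2, THEN conjunct2, THEN conjunct2, THEN conjunct2, THEN conjunct2, THEN conjunct2, THEN conjunct2, THEN conjunct1]
lemmas S10 = smc[unfolded symmetric_monoidal_def, THEN conjunct2, THEN conjunct2, THEN conjunct2, THEN conjunct2, THEN conjunct2, THEN conjunct2, THEN conjunct2, THEN conjunct2, THEN conjunct2, THEN conjunct2, THEN conjunct1]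
lemmas S11 = smc[unfolded symmetric_monoidal_def, THEN conjunct2, THEN conjunct2, THEN conjunct2, THEN conjunct2, THEN conjunct2, THEN conjunct2, THEN conjunct2, THEN conjunct2, THEN conjunct2, THEN conjunct2, THEN conjunct2, THEN conjunct1]
lemmas S12 = smc[unfolded symmetric_monoidal_def, THEN conjunct2, THEN conjunct2, THEN conjunct2, THEN conjunct2, THEN conjunct2, THEN conjunct2, THEN conjunct2, THEN conjunct2, THEN conjunct2, THEN conjunct2, THEN conjunct2, THEN conjunct2, THEN conjunct1]
lemmas S13 = smc[unfolded symmetric_monoidal_def, THEN conjunct2, THEN conjunct2, THEN conjunct2, THEN conjunct2, THEN conjunct2, THEN conjunct2, THEN conjunct2, THEN conjunct2, THEN conjunct2, THEN conjunct2, THEN conjunct2, THEN conjunct2, THEN conjunct2, THEN conjunct1]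
lemmas S14 = smc[unfolded symmetric_monoidal_def, THEN conjunct2, THEN conjunct2, THEN conjunct2, THEN conjunct2, THEN conjunct2, THEN conjunct2, THEN conjunct2, THEN conjunct2, THEN conjunct2, THEN conjunct2, THEN conjunct2, THEN conjunct2, THEN conjunct2, THEN conjunct2]
lemmas AD0 = add[unfolded additive_def, THEN conjunct1]
lemmas AD1 = add[unfolded additive_def, THEN conjunct2, THEN conjunct1]
lemmas AD2 = add[unfolded additive_def, THEN conjunct2, THEN conjunct2, THEN conjunct1]
lemmas AD3 = add[unfolded additive_def, THEN conjunct2, THEN conjunct2, THEN conjunct2, THEN conjunct1]
lemmas AD4 = add[unfolded additive_def, THEN conjunct2, THEN conjunct2, THEN conjunct2, THEN conjunct2, THEN conjunct1]
lemmas AD5 = add[unfolded additive_def, THEN conjunct2, THEN conjunct2, THEN conjunct2, THEN conjunct2, THEN conjunct2, THEN conjunct1]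
lemmas AD6 = add[unfolded additive_def, THEN conjunct2, THEN conjunct2, THEN conjunct2, THEN conjunct2, THEN conjunct2, THEN conjunct2, THEN conjunct1]
lemmas AD7 = add[unfolded additive_def, THEN conjunct2, THEN conjunct2, THEN conjunct2, THEN conjunct2, THEN conjunct2, THEN conjunct2, THEN conjunct2, THEN conjunct1]
lemmas AD8 = add[unfolded additive_def, THEN conjunct2, THEN conjunct2, THEN conjunct2, THEN conjunct2, THEN conjunct2, THEN conjunct2, THEN conjunct2, THEN conjunct2, THEN conjunct1]
lemmas AD9 = add[unfolded additive_def, THEN conjunct2, THEN conjunct2, THEN conjunct2, THEN conjunct2, THEN conjunct2, THEN conjunct2, THEN conjunct2, THEN conjunct2, THEN conjunct2, THEN conjunct1]
lemmas AD10 = add[unfolded additive_def, THEN conjunct2, THEN conjunct2, THEN conjunct2, THEN conjunct2, THEN conjunct2, THEN conjunct2, THEN conjunct2, THEN conjunct2, THEN conjunct2, THEN conjunct2, THEN conjunct1]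
lemmas AD11 = add[unfolded additive_def, THEN conjunct2, THEN conjunct2, THEN conjunct2, THEN conjunct2, THEN conjunct2, THEN conjunct2, THEN conjunct2, THEN conjunct2, THEN conjunct2, THEN conjunct2, THEN conjunct2, THEN conjunct1]
lemmas AD12 = add[unfolded additive_def, THEN conjunct2, THEN conjunct2, THEN conjunct2, THEN conjunct2, THEN conjunct2, THEN conjunct2, THEN conjunct2, THEN conjunct2, THEN conjunct2, THEN conjunct2, THEN conjunct2, THEN conjunct2]

lemma ten_typ: "arr f \<Longrightarrow> arr g \<Longrightarrow> arr (f \<otimes> g) \<and> dm (f \<otimes> g) = dm f \<odot> dm g \<and> cd (f \<otimes> g) = cd f \<odot> cd g"
  using S0[rule_format, of f "dm f" "cd f" g "dm g" "cd g"] by (simp add: hom_iff)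
lemma arr_ten[simp]: "arr f \<Longrightarrow> arr g \<Longrightarrow> arr (f \<otimes> g)"
  and dm_ten[simp]: "arr f \<Longrightarrow> arr g \<Longrightarrow> dm (f \<otimes> g) = dm f \<odot> dm g"
  and cd_ten[simp]: "arr f \<Longrightarrow> arr g \<Longrightarrow> cd (f \<otimes> g) = cd f \<odot> cd g"
  using ten_typ by auto
lemma ten_id[simp]: "ii A \<otimes> ii B = ii (A \<odot> B)"
  using S1 unfolding hom_iff by blast
lemma ten_cmp: "arr f \<Longrightarrow> arr f' \<Longrightarrow> arr g \<Longrightarrow> arr g' \<Longrightarrow> cd f = dm f' \<Longrightarrow> cd g = dm g' \<Longrightarrow>
   (f \<cdot> f') \<otimes> (g \<cdot> g') = (f \<otimes> g) \<cdot> (f' \<otimes> g')"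
  by (rule S2[rule_format]) (simp_all add: hom_iff)

lemma isos: "is_iso C (as A B E) ((A \<odot> B) \<odot> E) (A \<odot> (B \<odot> E))"
  "is_iso C (lu' A) (K \<odot> A) A" "is_iso C (ru' A) (A \<odot> K) A"
  using S3 S4 S5 by blast+

lemma as_typ[simp]: "arr (as A B E)" "dm (as A B E) = (A \<odot> B) \<odot> E" "cd (as A B E) = A \<odot> (B \<odot> E)"
  "arr (iv (as A B E))" "dm (iv (as A B E)) = A \<odot> (B \<odot> E)" "cd (iv (as A B E)) = (A \<odot> B) \<odot> E"
  using isos(1)[of A B E] iso_inv[OF isos(1)[of A B E]] by (auto simp: is_iso_def hom_iff)
lemma as_inv[simp]: "as A B E \<cdot> iv (as A B E) = ii ((A \<odot> B) \<odot> E)" "iv (as A B E) \<cdot> as A B E = ii (A \<odot> (B \<odot> E))"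
  using iso_inv[OF isos(1)[of A B E]] by auto
lemma lu_typ[simp]: "arr (lu' A)" "dm (lu' A) = K \<odot> A" "cd (lu' A) = A"
  "arr (iv (lu' A))" "dm (iv (lu' A)) = A" "cd (iv (lu' A)) = K \<odot> A"
  using isos(2)[of A] iso_inv[OF isos(2)[of A]] by (auto simp: is_iso_def hom_iff)
lemma lu_inv[simp]: "lu' A \<cdot> iv (lu' A) = ii (K \<odot> A)" "iv (lu' A) \<cdot> lu' A = ii A"
  using iso_inv[OF isos(2)[of A]] by auto
lemma ru_typ[simp]: "arr (ru' A)" "dm (ru' A) = A \<odot> K" "cd (ru' A) = A"
  "arr (iv (ru' A))" "dm (iv (ru' A)) = A" "cd (iv (ru' A)) = A \<odot> K"
  using isos(3)[of A] iso_inv[OF isos(3)[of A]] by (auto simp: is_iso_def hom_iff)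
lemma ru_inv[simp]: "ru' A \<cdot> iv (ru' A) = ii (A \<odot> K)" "iv (ru' A) \<cdot> ru' A = ii A"
  using iso_inv[OF isos(3)[of A]] by auto
lemma sy_typ[simp]: "arr (sy A B)" "dm (sy A B) = A \<odot> B" "cd (sy A B) = B \<odot> A"
  using S6 unfolding hom_iff by blast+

lemma as_nat: "arr f \<Longrightarrow> arr g \<Longrightarrow> arr h \<Longrightarrow>
   ((f \<otimes> g) \<otimes> h) \<cdot> as (cd f) (cd g) (cd h) = as (dm f) (dm g) (dm h) \<cdot> (f \<otimes> (g \<otimes> h))"
  by (rule S8[rule_format]) (simp_all add: hom_iff)
lemma lu_nat: "arr f \<Longrightarrow> (ii K \<otimes> f) \<cdot> lu' (cd f) = lu' (dm f) \<cdot> f"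
  using S9 unfolding hom_iff by blast
lemma ru_nat: "arr f \<Longrightarrow> (f \<otimes> ii K) \<cdot> ru' (cd f) = ru' (dm f) \<cdot> f"
  using S10 unfolding hom_iff by blast
lemma sy_nat: "arr f \<Longrightarrow> arr g \<Longrightarrow> (f \<otimes> g) \<cdot> sy (cd f) (cd g) = sy (dm f) (dm g) \<cdot> (g \<otimes> f)"
  by (rule S11[rule_format]) (simp_all add: hom_iff)
lemma pentagon: "as (A \<odot> B) E F \<cdot> as A B (E \<odot> F) =
        (as A B E \<otimes> ii F) \<cdot> as A (B \<odot> E) F \<cdot> (ii A \<otimes> as B E F)"
  using S12 unfolding hom_iff by blast
lemma triangle: "as A K B \<cdot> (ii A \<otimes> lu' B) = ru' A \<otimes> ii B"
  using S13 unfolding hom_iff by blast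

lemma z_typ[simp]: "arr (z A B)" "dm (z A B) = A" "cd (z A B) = B"
  using AD0 unfolding hom_iff by blast+
lemma add_typ: "arr f \<Longrightarrow> arr g \<Longrightarrow> dm f = dm g \<Longrightarrow> cd f = cd g \<Longrightarrow>
   arr (f \<oplus> g) \<and> dm (f \<oplus> g) = dm f \<and> cd (f \<oplus> g) = cd f"
  using AD1[rule_format, of f "dm f" "cd f" g] by (simp add: hom_iff)
lemma arr_add[simp]: "arr f \<Longrightarrow> arr g \<Longrightarrow> dm f = dm g \<Longrightarrow> cd f = cd g \<Longrightarrow> arr (f \<oplus> g)"
  and dm_add[simp]: "arr f \<Longrightarrow> arr g \<Longrightarrow> dm f = dm g \<Longrightarrow> cd f = cd g \<Longrightarrow> dm (f \<oplus> g) = dm f"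
  and cd_add[simp]: "arr f \<Longrightarrow> arr g \<Longrightarrow> dm f = dm g \<Longrightarrow> cd f = cd g \<Longrightarrow> cd (f \<oplus> g) = cd f"
  using add_typ by auto
lemma add_assoc: "arr f \<Longrightarrow> arr g \<Longrightarrow> arr h \<Longrightarrow> dm f = dm g \<Longrightarrow> cd f = cd g \<Longrightarrow> dm h = dm f \<Longrightarrow> cd h = cd f \<Longrightarrow>
   (f \<oplus> g) \<oplus> h = f \<oplus> (g \<oplus> h)"
  by (rule AD2[rule_format]) (simp_all add: hom_iff)
lemma add_comm: "arr f \<Longrightarrow> arr g \<Longrightarrow> dm f = dm g \<Longrightarrow> cd f = cd g \<Longrightarrow> f \<oplus> g = g \<oplus> f"
  by (rule AD3[rule_format]) (simp_all add: hom_iff)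
lemma add_z[simp]: "arr f \<Longrightarrow> dm f = A \<Longrightarrow> cd f = B \<Longrightarrow> f \<oplus> z A B = f"
  using AD4 unfolding hom_iff by blast
lemma z_add[simp]: "arr f \<Longrightarrow> dm f = A \<Longrightarrow> cd f = B \<Longrightarrow> z A B \<oplus> f = f"
  using add_comm[of f "z A B"] by simp
lemma cmp_add: "arr f \<Longrightarrow> arr g \<Longrightarrow> arr h \<Longrightarrow> cd f = dm g \<Longrightarrow> dm h = dm g \<Longrightarrow> cd h = cd g \<Longrightarrow>
   f \<cdot> (g \<oplus> h) = (f \<cdot> g) \<oplus> (f \<cdot> h)"
  by (rule AD5[rule_format]) (simp_all add: hom_iff)
lemma add_cmp: "arr f \<Longrightarrow> arr g \<Longrightarrow> arr h \<Longrightarrow> dm f = dm g \<Longrightarrow> cd f = cd g \<Longrightarrow> cd f = dm h \<Longrightarrow>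
   (f \<oplus> g) \<cdot> h = (f \<cdot> h) \<oplus> (g \<cdot> h)"
  by (rule AD6[rule_format]) (simp_all add: hom_iff)
lemma cmp_z[simp]: "arr f \<Longrightarrow> cd f = B \<Longrightarrow> f \<cdot> z B E = z (dm f) E"
  using AD7 unfolding hom_iff by blast
lemma z_cmp[simp]: "arr f \<Longrightarrow> dm f = B \<Longrightarrow> z A B \<cdot> f = z A (cd f)"
  using AD8 unfolding hom_iff by blast
lemma ten_add: "arr f \<Longrightarrow> arr g \<Longrightarrow> arr h \<Longrightarrow> dm h = dm g \<Longrightarrow> cd h = cd g \<Longrightarrow>
   f \<otimes> (g \<oplus> h) = (f \<otimes> g) \<oplus> (f \<otimes> h)"
  by (rule AD9[rule_format]) (simp_all add: hom_iff)
lemma add_ten: "arr f \<Longrightarrow> arr g \<Longrightarrow> arr h \<Longrightarrow> dm f = dm g \<Longrightarrow> cd f = cd g \<Longrightarrow>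
   (f \<oplus> g) \<otimes> h = (f \<otimes> h) \<oplus> (g \<otimes> h)"
  by (rule AD10[rule_format]) (simp_all add: hom_iff)
lemma ten_z[simp]: "arr f \<Longrightarrow> f \<otimes> z E F = z (dm f \<odot> E) (cd f \<odot> F)"
  using AD11 unfolding hom_iff by blast
lemma z_ten[simp]: "arr f \<Longrightarrow> z A B \<otimes> f = z (A \<odot> dm f) (B \<odot> cd f)"
  using AD12 unfolding hom_iff by blast

lemmas MC0 = mcm[unfolded monoidal_coalgebra_modality_def, THEN conjunct1]
lemmas MC1 = mcm[unfolded monoidal_coalgebra_modality_def, THEN conjunct2, THEN conjunct1]
lemmas MC2 = mcm[unfolded monoidal_coalgebra_modality_def, THEN conjunct2, THEN conjunct2, THEN conjunct1]
lemmas MC3 = mcm[unfolded monoidal_coalgebra_modality_def, THEN conjunct2, THEN conjunct2, THEN conjunct2, THEN conjunct1]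
lemmas MC4 = mcm[unfolded monoidal_coalgebra_modality_def, THEN conjunct2, THEN conjunct2, THEN conjunct2, THEN conjunct2, THEN conjunct1]
lemmas MC5 = mcm[unfolded monoidal_coalgebra_modality_def, THEN conjunct2, THEN conjunct2, THEN conjunct2, THEN conjunct2, THEN conjunct2, THEN conjunct1]
lemmas MC6 = mcm[unfolded monoidal_coalgebra_modality_def, THEN conjunct2, THEN conjunct2, THEN conjunct2, THEN conjunct2, THEN conjunct2, THEN conjunct2, THEN conjunct1]
lemmas MC7 = mcm[unfolded monoidal_coalgebra_modality_def, THEN conjunct2, THEN conjunct2, THEN conjunct2, THEN conjunct2, THEN conjunct2, THEN conjunct2, THEN conjunct2, THEN conjunct1]
lemmas MC8 = mcm[unfolded monoidal_coalgebra_modality_def, THEN conjunct2, THEN conjunct2, THEN conjunct2, THEN conjunct2, THEN conjunct2, THEN conjunct2, THEN conjunct2, THEN conjunct2, THEN conjunct1]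
lemmas MC9 = mcm[unfolded monoidal_coalgebra_modality_def, THEN conjunct2, THEN conjunct2, THEN conjunct2, THEN conjunct2, THEN conjunct2, THEN conjunct2, THEN conjunct2, THEN conjunct2, THEN conjunct2, THEN conjunct1]
lemmas MC10 = mcm[unfolded monoidal_coalgebra_modality_def, THEN conjunct2, THEN conjunct2, THEN conjunct2, THEN conjunct2, THEN conjunct2, THEN conjunct2, THEN conjunct2, THEN conjunct2, THEN conjunct2, THEN conjunct2, THEN conjunct1]
lemmas MC11 = mcm[unfolded monoidal_coalgebra_modality_def, THEN conjunct2, THEN conjunct2, THEN conjunct2, THEN conjunct2, THEN conjunct2, THEN conjunct2, THEN conjunct2, THEN conjunct2, THEN conjunct2, THEN conjunct2, THEN conjunct2, THEN conjunct1]
lemmas MC12 = mcm[unfolded monoidal_coalgebra_modality_def, THEN conjunct2, THEN conjunct2, THEN conjunct2, THEN conjunct2, THEN conjunct2, THEN conjunct2, THEN conjunct2, THEN conjunct2, THEN conjunct2, THEN conjunct2, THEN conjunct2, THEN conjunct2, THEN conjunct1]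
lemmas MC13 = mcm[unfolded monoidal_coalgebra_modality_def, THEN conjunct2, THEN conjunct2, THEN conjunct2, THEN conjunct2, THEN conjunct2, THEN conjunct2, THEN conjunct2, THEN conjunct2, THEN conjunct2, THEN conjunct2, THEN conjunct2, THEN conjunct2, THEN conjunct2, THEN conjunct1]
lemmas MC14 = mcm[unfolded monoidal_coalgebra_modality_def, THEN conjunct2, THEN conjunct2, THEN conjunct2, THEN conjunct2, THEN conjunct2, THEN conjunct2, THEN conjunct2, THEN conjunct2, THEN conjunct2, THEN conjunct2, THEN conjunct2, THEN conjunct2, THEN conjunct2, THEN conjunct2, THEN conjunct1]
lemmas MC15 = mcm[unfolded monoidal_coalgebra_modality_def, THEN conjunct2, THEN conjunct2, THEN conjunct2, THEN conjunct2, THEN conjunct2, THEN conjunct2, THEN conjunct2, THEN conjunct2, THEN conjunct2, THEN conjunct2, THEN conjunct2, THEN conjunct2, THEN conjunct2, THEN conjunct2, THEN conjunct2, THEN conjunct1]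
lemmas MC16 = mcm[unfolded monoidal_coalgebra_modality_def, THEN conjunct2, THEN conjunct2, THEN conjunct2, THEN conjunct2, THEN conjunct2, THEN conjunct2, THEN conjunct2, THEN conjunct2, THEN conjunct2, THEN conjunct2, THEN conjunct2, THEN conjunct2, THEN conjunct2, THEN conjunct2, THEN conjunct2, THEN conjunct2, THEN conjunct1]
lemmas MC17 = mcm[unfolded monoidal_coalgebra_modality_def, THEN conjunct2, THEN conjunct2, THEN conjunct2, THEN conjunct2, THEN conjunct2, THEN conjunct2, THEN conjunct2, THEN conjunct2, THEN conjunct2, THEN conjunct2, THEN conjunct2, THEN conjunct2, THEN conjunct2, THEN conjunct2, THEN conjunct2, THEN conjunct2, THEN conjunct2, THEN conjunct1]
lemmas MC18 = mcm[unfolded monoidal_coalgebra_modality_def, THEN conjunct2, THEN conjunct2, THEN conjunct2, THEN conjunct2, THEN conjunct2, THEN conjunct2, THEN conjunct2, THEN conjunct2, THEN conjunct2, THEN conjunct2, THEN conjunct2, THEN conjunct2, THEN conjunct2, THEN conjunct2, THEN conjunct2, THEN conjunct2, THEN conjunct2, THEN conjunct2, THEN conjunct1]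
lemmas MC19 = mcm[unfolded monoidal_coalgebra_modality_def, THEN conjunct2, THEN conjunct2, THEN conjunct2, THEN conjunct2, THEN conjunct2, THEN conjunct2, THEN conjunct2, THEN conjunct2, THEN conjunct2, THEN conjunct2, THEN conjunct2, THEN conjunct2, THEN conjunct2, THEN conjunct2, THEN conjunct2, THEN conjunct2, THEN conjunct2, THEN conjunct2, THEN conjunct2, THEN conjunct1]
lemmas MC20 = mcm[unfolded monoidal_coalgebra_modality_def, THEN conjunct2, THEN conjunct2, THEN conjunct2, THEN conjunct2, THEN conjunct2, THEN conjunct2, THEN conjunct2, THEN conjunct2, THEN conjunct2, THEN conjunct2, THEN conjunct2, THEN conjunct2, THEN conjunct2, THEN conjunct2, THEN conjunct2, THEN conjunct2, THEN conjunct2, THEN conjunct2, THEN conjunct2, THEN conjunct2, THEN conjunct1]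
lemmas MC21 = mcm[unfolded monoidal_coalgebra_modality_def, THEN conjunct2, THEN conjunct2, THEN conjunct2, THEN conjunct2, THEN conjunct2, THEN conjunct2, THEN conjunct2, THEN conjunct2, THEN conjunct2, THEN conjunct2, THEN conjunct2, THEN conjunct2, THEN conjunct2, THEN conjunct2, THEN conjunct2, THEN conjunct2, THEN conjunct2, THEN conjunct2, THEN conjunct2, THEN conjunct2, THEN conjunct2, THEN conjunct1]
lemmas MC22 = mcm[unfolded monoidal_coalgebra_modality_def, THEN conjunct2, THEN conjunct2, THEN conjunct2, THEN conjunct2, THEN conjunct2, THEN conjunct2, THEN conjunct2, THEN conjunct2, THEN conjunct2, THEN conjunct2, THEN conjunct2, THEN conjunct2, THEN conjunct2, THEN conjunct2, THEN conjunct2, THEN conjunct2, THEN conjunct2, THEN conjunct2, THEN conjunct2, THEN conjunct2, THEN conjunct2, THEN conjunct2, THEN conjunct1]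
lemmas MC23 = mcm[unfolded monoidal_coalgebra_modality_def, THEN conjunct2, THEN conjunct2, THEN conjunct2, THEN conjunct2, THEN conjunct2, THEN conjunct2, THEN conjunct2, THEN conjunct2, THEN conjunct2, THEN conjunct2, THEN conjunct2, THEN conjunct2, THEN conjunct2, THEN conjunct2, THEN conjunct2, THEN conjunct2, THEN conjunct2, THEN conjunct2, THEN conjunct2, THEN conjunct2, THEN conjunct2, THEN conjunct2, THEN conjunct2, THEN conjunct1]
lemmas MC24 = mcm[unfolded monoidal_coalgebra_modality_def, THEN conjunct2, THEN conjunct2, THEN conjunct2, THEN conjunct2, THEN conjunct2, THEN conjunct2, THEN conjunct2, THEN conjunct2, THEN conjunct2, THEN conjunct2, THEN conjunct2, THEN conjunct2, THEN conjunct2, THEN conjunct2, THEN conjunct2, THEN conjunct2, THEN conjunct2, THEN conjunct2, THEN conjunct2, THEN conjunct2, THEN conjunct2, THEN conjunct2, THEN conjunct2, THEN conjunct2, THEN conjunct1]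
lemmas MC25 = mcm[unfolded monoidal_coalgebra_modality_def, THEN conjunct2, THEN conjunct2, THEN conjunct2, THEN conjunct2, THEN conjunct2, THEN conjunct2, THEN conjunct2, THEN conjunct2, THEN conjunct2, THEN conjunct2, THEN conjunct2, THEN conjunct2, THEN conjunct2, THEN conjunct2, THEN conjunct2, THEN conjunct2, THEN conjunct2, THEN conjunct2, THEN conjunct2, THEN conjunct2, THEN conjunct2, THEN conjunct2, THEN conjunct2, THEN conjunct2, THEN conjunct2, THEN conjunct1]
lemmas MC26 = mcm[unfolded monoidal_coalgebra_modality_def, THEN conjunct2, THEN conjunct2, THEN conjunct2, THEN conjunct2, THEN conjunct2, THEN conjunct2, THEN conjunct2, THEN conjunct2, THEN conjunct2, THEN conjunct2, THEN conjunct2, THEN conjunct2, THEN conjunct2, THEN conjunct2, THEN conjunct2, THEN conjunct2, THEN conjunct2, THEN conjunct2, THEN conjunct2, THEN conjunct2, THEN conjunct2, THEN conjunct2, THEN conjunct2, THEN conjunct2, THEN conjunct2, THEN conjunct2, THEN conjunct1]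
lemmas MC27 = mcm[unfolded monoidal_coalgebra_modality_def, THEN conjunct2, THEN conjunct2, THEN conjunct2, THEN conjunct2, THEN conjunct2, THEN conjunct2, THEN conjunct2, THEN conjunct2, THEN conjunct2, THEN conjunct2, THEN conjunct2, THEN conjunct2, THEN conjunct2, THEN conjunct2, THEN conjunct2, THEN conjunct2, THEN conjunct2, THEN conjunct2, THEN conjunct2, THEN conjunct2, THEN conjunct2, THEN conjunct2, THEN conjunct2, THEN conjunct2, THEN conjunct2, THEN conjunct2, THEN conjunct2, THEN conjunct1]
lemmas MC28 = mcm[unfolded monoidal_coalgebra_modality_def, THEN conjunct2, THEN conjunct2, THEN conjunct2, THEN conjunct2, THEN conjunct2, THEN conjunct2, THEN conjunct2, THEN conjunct2, THEN conjunct2, THEN conjunct2, THEN conjunct2, THEN conjunct2, THEN conjunct2, THEN conjunct2, THEN conjunct2, THEN conjunct2, THEN conjunct2, THEN conjunct2, THEN conjunct2, THEN conjunct2, THEN conjunct2, THEN conjunct2, THEN conjunct2, THEN conjunct2, THEN conjunct2, THEN conjunct2, THEN conjunct2, THEN conjunct2, THEN conjunct1]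
lemmas MC29 = mcm[unfolded monoidal_coalgebra_modality_def, THEN conjunct2, THEN conjunct2, THEN conjunct2, THEN conjunct2, THEN conjunct2, THEN conjunct2, THEN conjunct2, THEN conjunct2, THEN conjunct2, THEN conjunct2, THEN conjunct2, THEN conjunct2, THEN conjunct2, THEN conjunct2, THEN conjunct2, THEN conjunct2, THEN conjunct2, THEN conjunct2, THEN conjunct2, THEN conjunct2, THEN conjunct2, THEN conjunct2, THEN conjunct2, THEN conjunct2, THEN conjunct2, THEN conjunct2, THEN conjunct2, THEN conjunct2, THEN conjunct2, THEN conjunct1]
lemmas MC30 = mcm[unfolded monoidal_coalgebra_modality_def, THEN conjunct2, THEN conjunct2, THEN conjunct2, THEN conjunct2, THEN conjunct2, THEN conjunct2, THEN conjunct2, THEN conjunct2, THEN conjunct2, THEN conjunct2, THEN conjunct2, THEN conjunct2, THEN conjunct2, THEN conjunct2, THEN conjunct2, THEN conjunct2, THEN conjunct2, THEN conjunct2, THEN conjunct2, THEN conjunct2, THEN conjunct2, THEN conjunct2, THEN conjunct2, THEN conjunct2, THEN conjunct2, THEN conjunct2, THEN conjunct2, THEN conjunct2, THEN conjunct2, THEN conjunct2, THEN conjunct1]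
lemmas MC31 = mcm[unfolded monoidal_coalgebra_modality_def, THEN conjunct2, THEN conjunct2, THEN conjunct2, THEN conjunct2, THEN conjunct2, THEN conjunct2, THEN conjunct2, THEN conjunct2, THEN conjunct2, THEN conjunct2, THEN conjunct2, THEN conjunct2, THEN conjunct2, THEN conjunct2, THEN conjunct2, THEN conjunct2, THEN conjunct2, THEN conjunct2, THEN conjunct2, THEN conjunct2, THEN conjunct2, THEN conjunct2, THEN conjunct2, THEN conjunct2, THEN conjunct2, THEN conjunct2, THEN conjunct2, THEN conjunct2, THEN conjunct2, THEN conjunct2, THEN conjunct2, THEN conjunct1]
lemmas MC32 = mcm[unfolded monoidal_coalgebra_modality_def, THEN conjunct2, THEN conjunct2, THEN conjunct2, THEN conjunct2, THEN conjunct2, THEN conjunct2, THEN conjunct2, THEN conjunct2, THEN conjunct2, THEN conjunct2, THEN conjunct2, THEN conjunct2, THEN conjunct2, THEN conjunct2, THEN conjunct2, THEN conjunct2, THEN conjunct2, THEN conjunct2, THEN conjunct2, THEN conjunct2, THEN conjunct2, THEN conjunct2, THEN conjunct2, THEN conjunct2, THEN conjunct2, THEN conjunct2, THEN conjunct2, THEN conjunct2, THEN conjunct2, THEN conjunct2, THEN conjunct2, THEN conjunct2, THEN conjunct1]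
lemmas MC33 = mcm[unfolded monoidal_coalgebra_modality_def, THEN conjunct2, THEN conjunct2, THEN conjunct2, THEN conjunct2, THEN conjunct2, THEN conjunct2, THEN conjunct2, THEN conjunct2, THEN conjunct2, THEN conjunct2, THEN conjunct2, THEN conjunct2, THEN conjunct2, THEN conjunct2, THEN conjunct2, THEN conjunct2, THEN conjunct2, THEN conjunct2, THEN conjunct2, THEN conjunct2, THEN conjunct2, THEN conjunct2, THEN conjunct2, THEN conjunct2, THEN conjunct2, THEN conjunct2, THEN conjunct2, THEN conjunct2, THEN conjunct2, THEN conjunct2, THEN conjunct2, THEN conjunct2, THEN conjunct2, THEN conjunct1]
lemmas MC34 = mcm[unfolded monoidal_coalgebra_modality_def, THEN conjunct2, THEN conjunct2, THEN conjunct2, THEN conjunct2, THEN conjunct2, THEN conjunct2, THEN conjunct2, THEN conjunct2, THEN conjunct2, THEN conjunct2, THEN conjunct2, THEN conjunct2, THEN conjunct2, THEN conjunct2, THEN conjunct2, THEN conjunct2, THEN conjunct2, THEN conjunct2, THEN conjunct2, THEN conjunct2, THEN conjunct2, THEN conjunct2, THEN conjunct2, THEN conjunct2, THEN conjunct2, THEN conjunct2, THEN conjunct2, THEN conjunct2, THEN conjunct2, THEN conjunct2, THEN conjunct2, THEN conjunct2, THEN conjunct2, THEN conjunct2]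

lemma bm_typ[simp]: "arr f \<Longrightarrow> arr (bm f)" "arr f \<Longrightarrow> dm (bm f) = bo (dm f)" "arr f \<Longrightarrow> cd (bm f) = bo (cd f)"
  using MC0 unfolding hom_iff by blast+
lemma bm_id[simp]: "bm (ii A) = ii (bo A)" using MC1 by blast
lemma bm_cmp: "arr f \<Longrightarrow> arr g \<Longrightarrow> cd f = dm g \<Longrightarrow> bm (f \<cdot> g) = bm f \<cdot> bm g"
  by (rule MC2[rule_format]) (simp_all add: hom_iff)
lemma dl_typ[simp]: "arr (dl A)" "dm (dl A) = bo A" "cd (dl A) = bo (bo A)"
  using MC3 unfolding hom_iff by blast+
lemma ep_typ[simp]: "arr (ep A)" "dm (ep A) = bo A" "cd (ep A) = A"
  using MC3 unfolding hom_iff by blast+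
lemma dl_nat: "arr f \<Longrightarrow> bm f \<cdot> dl (cd f) = dl (dm f) \<cdot> bm (bm f)"
  by (rule MC4[rule_format]) (simp_all add: hom_iff)
lemma ep_nat: "arr f \<Longrightarrow> bm f \<cdot> ep (cd f) = ep (dm f) \<cdot> f"
  by (rule MC5[rule_format]) (simp_all add: hom_iff)
lemma dl_ep[simp]: "dl A \<cdot> ep (bo A) = ii (bo A)" using MC6 by blast
lemma dl_bmep[simp]: "dl A \<cdot> bm (ep A) = ii (bo A)" using MC7 by blast
lemma dl_dl: "dl A \<cdot> dl (bo A) = dl A \<cdot> bm (dl A)" using MC8 by blast
lemma mm_typ[simp]: "arr (mm A B)" "dm (mm A B) = bo A \<odot> bo B" "cd (mm A B) = bo (A \<odot> B)"
  using MC9 unfolding hom_iff by blast+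
lemma mK_typ[simp]: "arr mK" "dm mK = K" "cd mK = bo K"
  using MC10 unfolding hom_iff by blast+
lemma mm_nat: "arr f \<Longrightarrow> arr g \<Longrightarrow> (bm f \<otimes> bm g) \<cdot> mm (cd f) (cd g) = mm (dm f) (dm g) \<cdot> bm (f \<otimes> g)"
  by (rule MC11[rule_format]) (simp_all add: hom_iff)
lemma mm_as: "as (bo A) (bo B) (bo E) \<cdot> (ii (bo A) \<otimes> mm B E) \<cdot> mm A (B \<odot> E) =
   (mm A B \<otimes> ii (bo E)) \<cdot> mm (A \<odot> B) E \<cdot> bm (as A B E)" using MC12 by blast
lemma mm_lu: "(mK \<otimes> ii (bo A)) \<cdot> mm K A \<cdot> bm (lu' A) = lu' (bo A)" using MC13 by blast
lemma mm_ru: "(ii (bo A) \<otimes> mK) \<cdot> mm A K \<cdot> bm (ru' A) = ru' (bo A)" using MC14 by blast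
lemma mm_ep: "mm A B \<cdot> ep (A \<odot> B) = ep A \<otimes> ep B" using MC16 by blast
lemma mK_ep[simp]: "mK \<cdot> ep K = ii K" using MC17 by blast
lemma mm_dl: "mm A B \<cdot> dl (A \<odot> B) = (dl A \<otimes> dl B) \<cdot> mm (bo A) (bo B) \<cdot> bm (mm A B)" using MC18 by blast
lemma mK_dl: "mK \<cdot> dl K = mK \<cdot> bm mK" using MC19 by blast
lemma D_typ[simp]: "arr (D A)" "dm (D A) = bo A" "cd (D A) = bo A \<odot> bo A"
  using MC20 unfolding hom_iff by blast+
lemma e_typ[simp]: "arr (ee A)" "dm (ee A) = bo A" "cd (ee A) = K"
  using MC20 unfolding hom_iff by blast+
lemma D_l: "D A \<cdot> (ee A \<otimes> ii (bo A)) \<cdot> lu' (bo A) = ii (bo A)" using MC22 by blast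
lemma D_r: "D A \<cdot> (ii (bo A) \<otimes> ee A) \<cdot> ru' (bo A) = ii (bo A)" using MC23 by blast
lemma D_nat: "arr f \<Longrightarrow> bm f \<cdot> D (cd f) = D (dm f) \<cdot> (bm f \<otimes> bm f)"
  by (rule MC25[rule_format]) (simp_all add: hom_iff)
lemma e_nat[simp]: "arr f \<Longrightarrow> cd f = B \<Longrightarrow> bm f \<cdot> ee B = ee (dm f)"
  using MC26[rule_format, of f "dm f" B] by (simp add: hom_iff)
lemma dl_D: "dl A \<cdot> D (bo A) = D A \<cdot> (dl A \<otimes> dl A)" using MC27 by blast
lemma dl_e[simp]: "dl A \<cdot> ee (bo A) = ee A" using MC28 by blast
lemma mm_D: "mm A B \<cdot> D (A \<odot> B) = (D A \<otimes> D B) \<cdot> interchange C (bo A) (bo A) (bo B) (bo B) \<cdot> (mm A B \<otimes> mm A B)"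
  using MC29 by blast
lemma mK_D: "mK \<cdot> D K = iv (ru' K) \<cdot> (mK \<otimes> mK)" using MC30 by blast
lemma mm_e: "mm A B \<cdot> ee (A \<odot> B) = (ee A \<otimes> ee B) \<cdot> lu' K" using MC31 by blast
lemma mK_e[simp]: "mK \<cdot> ee K = ii K" using MC32 by blast
lemma dl_bmD: "dl A \<cdot> bm (D A) = D A \<cdot> (dl A \<otimes> dl A) \<cdot> mm (bo A) (bo A)" using MC33 by blast
lemma dl_bme: "dl A \<cdot> bm (ee A) = ee A \<cdot> mK" using MC34 by blast


end


context amc begin

definition cmor where "cmor w v x \<longleftrightarrow> x \<cdot> v = w \<cdot> bm x"

lemma K1:
  assumes "arr x" "arr w" "cd x = bo B" "dm w = dm x" "cd w = bo (dm x)" "x \<cdot> dl B = w \<cdot> bm x"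
  shows "x = w \<cdot> bm (x \<cdot> ep B)"
proof -
  have "x = x \<cdot> (dl B \<cdot> bm (ep B))" using assms(1-5) by simp
  also have "\<dots> = (x \<cdot> dl B) \<cdot> bm (ep B)" using assms(1-5) by (simp add: assoc)
  also have "\<dots> = (w \<cdot> bm x) \<cdot> bm (ep B)" using assms(6) by simp
  also have "\<dots> = w \<cdot> bm (x \<cdot> ep B)" using assms(1-5) by (simp add: assoc bm_cmp)
  finally show ?thesis .
qed

lemma uniq:
  assumes "arr x" "arr y" "arr w" "cd x = bo B" "cd y = bo B" "dm y = dm x" "dm w = dm x" "cd w = bo (dm x)"
    "cmor w (dl B) x" "cmor w (dl B) y" "x \<cdot> ep B = y \<cdot> ep B"
  shows "x = y"
proof -
  have "x = w \<cdot> bm (x \<cdot> ep B)" by (rule K1) (use assms in \<open>simp_all add: cmor_def\<close>)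
  also have "\<dots> = w \<cdot> bm (y \<cdot> ep B)" using assms(11) by simp
  also have "\<dots> = y" by (rule K1[symmetric]) (use assms in \<open>simp_all add: cmor_def\<close>)
  finally show ?thesis .
qed

lemma cmor_cmp:
  assumes "arr x" "arr y" "arr w" "arr v" "arr u" "cd x = dm y" "dm w = dm x" "cd w = bo (dm x)"
     "dm v = dm y" "cd v = bo (dm y)" "dm u = cd y" "cd u = bo (cd y)"
     "cmor w v x" "cmor v u y"
  shows "cmor w u (x \<cdot> y)"
proof -
  have "x \<cdot> y \<cdot> u = x \<cdot> (y \<cdot> u)" using assms by (simp add: assoc)
  also have "\<dots> = x \<cdot> (v \<cdot> bm y)" using assms by (simp add: cmor_def)
  also have "\<dots> = (x \<cdot> v) \<cdot> bm y" using assms by (simp add: assoc)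
  also have "\<dots> = (w \<cdot> bm x) \<cdot> bm y" using assms by (simp add: cmor_def)
  also have "\<dots> = w \<cdot> bm (x \<cdot> y)" using assms by (simp add: assoc bm_cmp)
  finally show ?thesis unfolding cmor_def .
qed

lemma cmor_ten:
  assumes "arr x" "arr y" "arr w" "arr v" "arr w'" "arr v'"
    "dm w = dm x" "cd w = bo (dm x)" "dm v = dm y" "cd v = bo (dm y)"
    "dm w' = cd x" "cd w' = bo (cd x)" "dm v' = cd y" "cd v' = bo (cd y)"
    "cmor w w' x" "cmor v v' y"
  shows "cmor ((w \<otimes> v) \<cdot> mm (dm x) (dm y)) ((w' \<otimes> v') \<cdot> mm (cd x) (cd y)) (x \<otimes> y)"
proof -
  have "(x \<otimes> y) \<cdot> ((w' \<otimes> v') \<cdot> mm (cd x) (cd y)) = ((x \<otimes> y) \<cdot> (w' \<otimes> v')) \<cdot> mm (cd x) (cd y)"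
    using assms by (simp add: assoc)
  also have "\<dots> = ((x \<cdot> w') \<otimes> (y \<cdot> v')) \<cdot> mm (cd x) (cd y)" using assms by (simp add: ten_cmp)
  also have "\<dots> = ((w \<cdot> bm x) \<otimes> (v \<cdot> bm y)) \<cdot> mm (cd x) (cd y)" using assms by (simp add: cmor_def)
  also have "\<dots> = (w \<otimes> v) \<cdot> ((bm x \<otimes> bm y) \<cdot> mm (cd x) (cd y))" using assms by (simp add: ten_cmp assoc)
  also have "\<dots> = (w \<otimes> v) \<cdot> (mm (dm x) (dm y) \<cdot> bm (x \<otimes> y))" using assms by (simp add: mm_nat)
  also have "\<dots> = (w \<otimes> v) \<cdot> mm (dm x) (dm y) \<cdot> bm (x \<otimes> y)" using assms by (simp add: assoc)
  finally show ?thesis unfolding cmor_def .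
qed

lemma cmor_id: "arr w \<Longrightarrow> dm w = X \<Longrightarrow> cd w = bo X \<Longrightarrow> cmor w w (ii X)"
  unfolding cmor_def by simp

lemma cmor_bm: "arr f \<Longrightarrow> cmor (dl (dm f)) (dl (cd f)) (bm f)"
  unfolding cmor_def by (simp add: dl_nat)


definition hh where "hh A = ((ep A \<otimes> ee A) \<cdot> ru' A) \<oplus> ((ee A \<otimes> ep A) \<cdot> lu' A)"
definition tw where "tw w v X Y = (w \<otimes> v) \<cdot> mm X Y"
abbreviation om where "om A B \<equiv> tw (dl A) (dl B) (bo A) (bo B)"

lemma hh_typ[simp]: "arr (hh A)" "dm (hh A) = bo A \<odot> bo A" "cd (hh A) = A"
  unfolding hh_def by simp_all

lemma tw_typ[simp]: "arr w \<Longrightarrow> arr v \<Longrightarrow> cd w = bo X \<Longrightarrow> cd v = bo Y \<Longrightarrow> arr (tw w v X Y)"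
  "arr w \<Longrightarrow> arr v \<Longrightarrow> cd w = bo X \<Longrightarrow> cd v = bo Y \<Longrightarrow> dm (tw w v X Y) = dm w \<odot> dm v"
  "arr w \<Longrightarrow> arr v \<Longrightarrow> cd w = bo X \<Longrightarrow> cd v = bo Y \<Longrightarrow> cd (tw w v X Y) = bo (X \<odot> Y)"
  unfolding tw_def by simp_all

lemma nabla_eq: "nabla C M A = om A A \<cdot> bm (hh A)"
  unfolding nabla_def hh_def tw_def by simp

lemma nabla_typ[simp]: "arr (nabla C M A)" "dm (nabla C M A) = bo A \<odot> bo A" "cd (nabla C M A) = bo A"
  unfolding nabla_eq by simp_all

lemma unitm_typ[simp]: "arr (unitm C M A)" "dm (unitm C M A) = K" "cd (unitm C M A) = bo A"
  unfolding unitm_def by simp_all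

lemma om_ep: assumes "arr g" "dm g = bo A \<odot> bo B" shows "om A B \<cdot> bm g \<cdot> ep (cd g) = g"
proof -
  have "om A B \<cdot> bm g \<cdot> ep (cd g) = om A B \<cdot> (bm g \<cdot> ep (cd g))" using assms by (simp add: assoc)
  also have "\<dots> = om A B \<cdot> (ep (bo A \<odot> bo B) \<cdot> g)" using assms by (simp add: ep_nat)
  also have "\<dots> = (dl A \<otimes> dl B) \<cdot> (mm (bo A) (bo B) \<cdot> ep (bo A \<odot> bo B)) \<cdot> g" using assms by (simp add: assoc tw_def)
  also have "\<dots> = ((dl A \<cdot> ep (bo A)) \<otimes> (dl B \<cdot> ep (bo B))) \<cdot> g" using assms by (simp add: mm_ep ten_cmp[symmetric])
  also have "\<dots> = g" using assms by simp
  finally show ?thesis .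
qed

lemma nabla_ep: "nabla C M A \<cdot> ep A = hh A"
  using om_ep[of "hh A" A A] unfolding nabla_eq by simp

lemma cmor_dl: "cmor (dl A) (dl (bo A)) (dl A)"
  unfolding cmor_def by (simp add: dl_dl)

lemma cmor_mm: "cmor (om X Y) (dl (X \<odot> Y)) (mm X Y)"
  unfolding cmor_def tw_def using mm_dl[of X Y] by (simp add: assoc)

lemma om_coalg: "cmor (om A B) (dl (bo A \<odot> bo B)) (om A B)"
proof -
  have "cmor (om A B) (om (bo A) (bo B)) (dl A \<otimes> dl B)"
    using cmor_ten[of "dl A" "dl B" "dl A" "dl B" "dl (bo A)" "dl (bo B)"] cmor_dl
    by (simp add: tw_def)
  then show ?thesis using cmor_mm[of "bo A" "bo B"] unfolding tw_def
    by (intro cmor_cmp[where v="(dl (bo A) \<otimes> dl (bo B)) \<cdot> mm (bo (bo A)) (bo (bo B))"]) simp_all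
qed

lemma cmor_F: assumes "arr g" "dm g = bo A \<odot> bo B" shows "cmor (om A B) (dl (cd g)) (om A B \<cdot> bm g)"
  using om_coalg[of A B] cmor_bm[of g] assms
  by (intro cmor_cmp[where v="dl (bo A \<odot> bo B)"]) (simp_all add: tw_def)

lemma cmor_nabla: "cmor (om A A) (dl A) (nabla C M A)"
  unfolding nabla_eq using cmor_F[of "hh A" A A] by simp


lemma cancel_l:
  assumes "arr Q" "arr P" "arr x" "arr y" "cd Q = dm P" "cd P = dm x" "dm y = dm x" "Q \<cdot> P = ii (dm x)"
    "P \<cdot> x = P \<cdot> y"
  shows "x = y"
proof -
  have "x = (Q \<cdot> P) \<cdot> x" using assms(3,8) by simp
  also have "\<dots> = Q \<cdot> (P \<cdot> x)" using assms(1-6) by (simp add: assoc)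
  also have "\<dots> = Q \<cdot> (P \<cdot> y)" using assms(9) by simp
  also have "\<dots> = (Q \<cdot> P) \<cdot> y" using assms(1-7) by (simp add: assoc)
  also have "\<dots> = y" using assms(4,7,8) by simp
  finally show ?thesis .
qed

lemma lu_faithful:
  assumes "arr f" "arr g" "dm g = dm f" "cd g = cd f" "ii K \<otimes> f = ii K \<otimes> g"
  shows "f = g"
proof -
  have "f = iv (lu' (dm f)) \<cdot> ((ii K \<otimes> f) \<cdot> lu' (cd f))"
    using assms(1) by (simp add: lu_nat flip: assoc)
  also have "\<dots> = iv (lu' (dm f)) \<cdot> ((ii K \<otimes> g) \<cdot> lu' (cd f))" using assms(5) by simp
  also have "\<dots> = g" using assms(2-4) lu_nat[of g] by (simp flip: assoc)
  finally show ?thesis .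
qed

lemma kelly: "as K B E \<cdot> lu' (B \<odot> E) = lu' B \<otimes> ii E"
proof -
  define P where "P = (as K K B \<otimes> ii E) \<cdot> as K (K \<odot> B) E"
  define Q where "Q = iv (as K (K \<odot> B) E) \<cdot> (iv (as K K B) \<otimes> ii E)"
  have P_typ: "arr P" "dm P = ((K \<odot> K) \<odot> B) \<odot> E" "cd P = K \<odot> ((K \<odot> B) \<odot> E)"
    unfolding P_def by simp_all
  have Q_typ: "arr Q" "cd Q = dm P" unfolding Q_def P_def by simp_all
  have QP: "Q \<cdot> P = ii (K \<odot> ((K \<odot> B) \<odot> E))"
  proof -
    have "Q \<cdot> P = iv (as K (K \<odot> B) E) \<cdot> (((iv (as K K B) \<otimes> ii E) \<cdot> (as K K B \<otimes> ii E)) \<cdot> as K (K \<odot> B) E)"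
      unfolding Q_def P_def by (simp add: assoc)
    also have "\<dots> = iv (as K (K \<odot> B) E) \<cdot> (((iv (as K K B) \<cdot> as K K B) \<otimes> (ii E \<cdot> ii E)) \<cdot> as K (K \<odot> B) E)"
      by (simp add: ten_cmp[symmetric])
    also have "\<dots> = ii (K \<odot> ((K \<odot> B) \<odot> E))" by simp
    finally show ?thesis .
  qed
  have L: "P \<cdot> (ii K \<otimes> (as K B E \<cdot> lu' (B \<odot> E))) = ((ru' K \<otimes> ii B) \<otimes> ii E) \<cdot> as K B E"
  proof -
    have "P \<cdot> (ii K \<otimes> (as K B E \<cdot> lu' (B \<odot> E))) = P \<cdot> ((ii K \<otimes> as K B E) \<cdot> (ii K \<otimes> lu' (B \<odot> E)))"
      by (simp add: ten_cmp[symmetric])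
    also have "\<dots> = (P \<cdot> (ii K \<otimes> as K B E)) \<cdot> (ii K \<otimes> lu' (B \<odot> E))"
      using P_typ by (simp add: assoc)
    also have "\<dots> = (as (K \<odot> K) B E \<cdot> as K K (B \<odot> E)) \<cdot> (ii K \<otimes> lu' (B \<odot> E))"
      unfolding P_def by (simp add: pentagon)
    also have "\<dots> = as (K \<odot> K) B E \<cdot> (ru' K \<otimes> ii (B \<odot> E))"
      by (simp add: assoc triangle)
    also have "\<dots> = as (K \<odot> K) B E \<cdot> (ru' K \<otimes> (ii B \<otimes> ii E))" by simp
    also have "\<dots> = ((ru' K \<otimes> ii B) \<otimes> ii E) \<cdot> as K B E"
      using as_nat[of "ru' K" "ii B" "ii E"] by simp
    finally show ?thesis .
  qed
  have R: "P \<cdot> (ii K \<otimes> (lu' B \<otimes> ii E)) = ((ru' K \<otimes> ii B) \<otimes> ii E) \<cdot> as K B E"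
  proof -
    have "P \<cdot> (ii K \<otimes> (lu' B \<otimes> ii E)) = (as K K B \<otimes> ii E) \<cdot> (as K (K \<odot> B) E \<cdot> (ii K \<otimes> (lu' B \<otimes> ii E)))"
      unfolding P_def by (simp add: assoc)
    also have "\<dots> = (as K K B \<otimes> ii E) \<cdot> (((ii K \<otimes> lu' B) \<otimes> ii E) \<cdot> as K B E)"
      using as_nat[of "ii K" "lu' B" "ii E"] by simp
    also have "\<dots> = ((as K K B \<otimes> ii E) \<cdot> ((ii K \<otimes> lu' B) \<otimes> ii E)) \<cdot> as K B E"
      by (simp add: assoc)
    also have "\<dots> = ((as K K B \<cdot> (ii K \<otimes> lu' B)) \<otimes> (ii E \<cdot> ii E)) \<cdot> as K B E"
      by (simp add: ten_cmp[symmetric])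
    also have "\<dots> = ((ru' K \<otimes> ii B) \<otimes> ii E) \<cdot> as K B E" by (simp add: triangle)
    finally show ?thesis .
  qed
  have "ii K \<otimes> (as K B E \<cdot> lu' (B \<odot> E)) = ii K \<otimes> (lu' B \<otimes> ii E)"
  proof (rule cancel_l[OF Q_typ(1) P_typ(1) _ _ Q_typ(2)])
    show "P \<cdot> (ii K \<otimes> (as K B E \<cdot> lu' (B \<odot> E))) = P \<cdot> (ii K \<otimes> (lu' B \<otimes> ii E))"
      by (simp only: L R)
  qed (simp_all add: QP P_typ)
  then show ?thesis by (rule lu_faithful[rotated -1]) simp_all
qed


lemma cmor_as:
  assumes "arr w" "arr v" "arr u" "dm w = X" "cd w = bo X" "dm v = Y" "cd v = bo Y" "dm u = Z" "cd u = bo Z"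
  shows "cmor (tw (tw w v X Y) u (X \<odot> Y) Z) (tw w (tw v u Y Z) X (Y \<odot> Z)) (as X Y Z)"
proof -
  have e: "w \<otimes> ((v \<otimes> u) \<cdot> mm Y Z) = (w \<otimes> (v \<otimes> u)) \<cdot> (ii (bo X) \<otimes> mm Y Z)"
    using ten_cmp[of w "ii (bo X)" "v \<otimes> u" "mm Y Z"] assms by simp
  have "as X Y Z \<cdot> ((w \<otimes> ((v \<otimes> u) \<cdot> mm Y Z)) \<cdot> mm X (Y \<odot> Z))
     = (as X Y Z \<cdot> (w \<otimes> (v \<otimes> u))) \<cdot> ((ii (bo X) \<otimes> mm Y Z) \<cdot> mm X (Y \<odot> Z))"
    unfolding e using assms by (simp add: assoc)
  also have "\<dots> = (((w \<otimes> v) \<otimes> u) \<cdot> as (bo X) (bo Y) (bo Z)) \<cdot> ((ii (bo X) \<otimes> mm Y Z) \<cdot> mm X (Y \<odot> Z))"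
    using assms as_nat[of w v u] by simp
  also have "\<dots> = ((w \<otimes> v) \<otimes> u) \<cdot> (as (bo X) (bo Y) (bo Z) \<cdot> (ii (bo X) \<otimes> mm Y Z) \<cdot> mm X (Y \<odot> Z))"
    using assms by (simp add: assoc)
  also have "\<dots> = ((w \<otimes> v) \<otimes> u) \<cdot> ((mm X Y \<otimes> ii (bo Z)) \<cdot> mm (X \<odot> Y) Z \<cdot> bm (as X Y Z))"
    by (simp add: mm_as)
  also have "\<dots> = (((w \<otimes> v) \<otimes> u) \<cdot> (mm X Y \<otimes> ii (bo Z))) \<cdot> mm (X \<odot> Y) Z \<cdot> bm (as X Y Z)"
    using assms by (simp add: assoc)
  also have "\<dots> = (((w \<otimes> v) \<cdot> mm X Y) \<otimes> (u \<cdot> ii (bo Z))) \<cdot> mm (X \<odot> Y) Z \<cdot> bm (as X Y Z)"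
    using assms by (simp add: ten_cmp[symmetric])
  finally show ?thesis using assms unfolding cmor_def tw_def by simp
qed

lemma cmor_lu:
  assumes "arr w" "dm w = X" "cd w = bo X"
  shows "cmor (tw mK w K X) w (lu' X)"
proof -
  have "lu' X \<cdot> w = (ii K \<otimes> w) \<cdot> lu' (bo X)" using assms lu_nat[of w] by simp
  also have "\<dots> = (ii K \<otimes> w) \<cdot> ((mK \<otimes> ii (bo X)) \<cdot> mm K X \<cdot> bm (lu' X))" by (simp add: mm_lu)
  also have "\<dots> = ((ii K \<otimes> w) \<cdot> (mK \<otimes> ii (bo X))) \<cdot> mm K X \<cdot> bm (lu' X)" using assms by (simp add: assoc)
  also have "\<dots> = (mK \<otimes> w) \<cdot> mm K X \<cdot> bm (lu' X)" using assms by (simp add: ten_cmp[symmetric])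
  finally show ?thesis unfolding cmor_def tw_def .
qed

lemma cmor_ru:
  assumes "arr w" "dm w = X" "cd w = bo X"
  shows "cmor (tw w mK X K) w (ru' X)"
proof -
  have "ru' X \<cdot> w = (w \<otimes> ii K) \<cdot> ru' (bo X)" using assms ru_nat[of w] by simp
  also have "\<dots> = (w \<otimes> ii K) \<cdot> ((ii (bo X) \<otimes> mK) \<cdot> mm X K \<cdot> bm (ru' X))" by (simp add: mm_ru)
  also have "\<dots> = ((w \<otimes> ii K) \<cdot> (ii (bo X) \<otimes> mK)) \<cdot> mm X K \<cdot> bm (ru' X)" using assms by (simp add: assoc)
  also have "\<dots> = (w \<otimes> mK) \<cdot> mm X K \<cdot> bm (ru' X)" using assms by (simp add: ten_cmp[symmetric])
  finally show ?thesis unfolding cmor_def tw_def .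
qed

lemma cmor_mK: "cmor mK (dl K) mK" unfolding cmor_def by (simp add: mK_dl)

lemma cmor_u: "cmor mK (dl A) (unitm C M A)"
  unfolding unitm_def using cmor_mK cmor_bm[of "z K A"]
  by (intro cmor_cmp[where v="dl K"]) simp_all

lemma cmor_e: "cmor (dl A) mK (ee A)" unfolding cmor_def by (simp add: dl_bme)

lemma cmor_D: "cmor (dl A) (om A A) (D A)"
  unfolding cmor_def tw_def using dl_bmD[of A] by (simp add: assoc)

lemma nabla_e: "nabla C M A \<cdot> ee A = (ee A \<otimes> ee A) \<cdot> lu' K"
proof -
  have "nabla C M A \<cdot> ee A = (dl A \<otimes> dl A) \<cdot> (mm (bo A) (bo A) \<cdot> (bm (hh A) \<cdot> ee A))"
    unfolding nabla_eq tw_def by (simp add: assoc)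
  also have "\<dots> = (dl A \<otimes> dl A) \<cdot> (mm (bo A) (bo A) \<cdot> ee (bo A \<odot> bo A))" by simp
  also have "\<dots> = ((dl A \<otimes> dl A) \<cdot> (ee (bo A) \<otimes> ee (bo A))) \<cdot> lu' K" by (simp add: mm_e assoc)
  also have "\<dots> = (ee A \<otimes> ee A) \<cdot> lu' K" by (simp add: ten_cmp[symmetric])
  finally show ?thesis .
qed

lemma u_ep: "unitm C M A \<cdot> ep A = z K A"
proof -
  have "unitm C M A \<cdot> ep A = mK \<cdot> (bm (z K A) \<cdot> ep A)" unfolding unitm_def by (simp add: assoc)
  also have "\<dots> = mK \<cdot> (ep K \<cdot> z K A)" using ep_nat[of "z K A"] by simp
  also have "\<dots> = (mK \<cdot> ep K) \<cdot> z K A" by (simp add: assoc)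
  also have "\<dots> = z K A" by simp
  finally show ?thesis .
qed

lemma u_e[simp]: "unitm C M A \<cdot> ee A = ii K"
  unfolding unitm_def by (simp add: assoc)


lemma ctx: "a \<cdot> b = c \<cdot> d \<Longrightarrow> arr a \<Longrightarrow> arr b \<Longrightarrow> arr c \<Longrightarrow> arr d \<Longrightarrow> cd a = dm b \<Longrightarrow> cd c = dm d \<Longrightarrow>
   cd d = cd b \<Longrightarrow> arr x \<Longrightarrow> cd b = dm x \<Longrightarrow> a \<cdot> (b \<cdot> x) = c \<cdot> (d \<cdot> x)"
  by (metis assoc)

lemma idten_comm:
  assumes "arr f" "arr p" "arr q" "arr s" "arr s'" "cd p = dm s'" "dm s = dm p" "cd s = dm q" "p \<cdot> s' = s \<cdot> q"
  shows "(f \<otimes> p) \<cdot> (ii (cd f) \<otimes> s') = (ii (dm f) \<otimes> s) \<cdot> (f \<otimes> q)"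
  using assms by (simp add: ten_cmp[symmetric])

lemma ivas_nat:
  assumes "arr g" "arr k" "arr l"
  shows "(g \<otimes> (k \<otimes> l)) \<cdot> iv (as (cd g) (cd k) (cd l)) = iv (as (dm g) (dm k) (dm l)) \<cdot> ((g \<otimes> k) \<otimes> l)"
proof -
  let ?a = "as (dm g) (dm k) (dm l)" and ?b = "as (cd g) (cd k) (cd l)"
  have "(g \<otimes> (k \<otimes> l)) \<cdot> iv ?b = (iv ?a \<cdot> ?a) \<cdot> ((g \<otimes> (k \<otimes> l)) \<cdot> iv ?b)" using assms by simp
  also have "\<dots> = iv ?a \<cdot> (?a \<cdot> ((g \<otimes> (k \<otimes> l)) \<cdot> iv ?b))" by (rule assoc) (use assms in simp_all)
  also have "?a \<cdot> ((g \<otimes> (k \<otimes> l)) \<cdot> iv ?b) = (?a \<cdot> (g \<otimes> (k \<otimes> l))) \<cdot> iv ?b"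
    by (rule assoc[symmetric]) (use assms in simp_all)
  also have "?a \<cdot> (g \<otimes> (k \<otimes> l)) = ((g \<otimes> k) \<otimes> l) \<cdot> ?b" using assms by (simp add: as_nat)
  also have "(((g \<otimes> k) \<otimes> l) \<cdot> ?b) \<cdot> iv ?b = ((g \<otimes> k) \<otimes> l) \<cdot> (?b \<cdot> iv ?b)"
    by (rule assoc) (use assms in simp_all)
  also have "\<dots> = (g \<otimes> k) \<otimes> l" using assms by simp
  finally show ?thesis .
qed

lemma I_typ[simp]: "arr (interchange C W X Y Z)" "dm (interchange C W X Y Z) = (W \<odot> X) \<odot> (Y \<odot> Z)"
   "cd (interchange C W X Y Z) = (W \<odot> Y) \<odot> (X \<odot> Z)"
  unfolding interchange_def by simp_all

lemma I_nat:
  assumes "arr f" "arr g" "arr k" "arr l"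
  shows "((f \<otimes> g) \<otimes> (k \<otimes> l)) \<cdot> interchange C (cd f) (cd g) (cd k) (cd l)
       = interchange C (dm f) (dm g) (dm k) (dm l) \<cdot> ((f \<otimes> k) \<otimes> (g \<otimes> l))"
proof -
  have n1: "((f \<otimes> g) \<otimes> (k \<otimes> l)) \<cdot> as (cd f) (cd g) (cd k \<odot> cd l) = as (dm f) (dm g) (dm k \<odot> dm l) \<cdot> (f \<otimes> (g \<otimes> (k \<otimes> l)))"
    using as_nat[of f g "k \<otimes> l"] assms by simp
  have n2: "(f \<otimes> (g \<otimes> (k \<otimes> l))) \<cdot> (ii (cd f) \<otimes> iv (as (cd g) (cd k) (cd l)))
       = (ii (dm f) \<otimes> iv (as (dm g) (dm k) (dm l))) \<cdot> (f \<otimes> ((g \<otimes> k) \<otimes> l))"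
    using assms ivas_nat[of g k l] by (intro idten_comm) simp_all
  have n3: "(f \<otimes> ((g \<otimes> k) \<otimes> l)) \<cdot> (ii (cd f) \<otimes> (sy (cd g) (cd k) \<otimes> ii (cd l)))
       = (ii (dm f) \<otimes> (sy (dm g) (dm k) \<otimes> ii (dm l))) \<cdot> (f \<otimes> ((k \<otimes> g) \<otimes> l))"
  proof (rule idten_comm)
    show "(g \<otimes> k) \<otimes> l \<cdot> sy (cd g) (cd k) \<otimes> ii (cd l) = sy (dm g) (dm k) \<otimes> ii (dm l) \<cdot> (k \<otimes> g) \<otimes> l"
      using assms sy_nat[of g k] by (simp add: ten_cmp[symmetric])
  qed (use assms in simp_all)
  have n4: "(f \<otimes> ((k \<otimes> g) \<otimes> l)) \<cdot> (ii (cd f) \<otimes> as (cd k) (cd g) (cd l))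
       = (ii (dm f) \<otimes> as (dm k) (dm g) (dm l)) \<cdot> (f \<otimes> (k \<otimes> (g \<otimes> l)))"
    using assms as_nat[of k g l] by (intro idten_comm) simp_all
  have n5: "(f \<otimes> (k \<otimes> (g \<otimes> l))) \<cdot> iv (as (cd f) (cd k) (cd g \<odot> cd l))
       = iv (as (dm f) (dm k) (dm g \<odot> dm l)) \<cdot> ((f \<otimes> k) \<otimes> (g \<otimes> l))"
    using assms ivas_nat[of f k "g \<otimes> l"] by simp
  show ?thesis unfolding interchange_def using assms
    by (simp add: assoc n1 n5 ctx[OF n1] ctx[OF n2] ctx[OF n3] ctx[OF n4])
qed


lemma hh_ten:
  assumes "arr p" "arr q" "cd p = bo A" "cd q = bo A"
  shows "(p \<otimes> q) \<cdot> hh A = (((p \<cdot> ep A) \<otimes> (q \<cdot> ee A)) \<cdot> ru' A) \<oplus> (((p \<cdot> ee A) \<otimes> (q \<cdot> ep A)) \<cdot> lu' A)"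
proof -
  have "(p \<otimes> q) \<cdot> hh A = ((p \<otimes> q) \<cdot> ((ep A \<otimes> ee A) \<cdot> ru' A)) \<oplus> ((p \<otimes> q) \<cdot> ((ee A \<otimes> ep A) \<cdot> lu' A))"
    unfolding hh_def using assms by (simp add: cmp_add)
  also have "(p \<otimes> q) \<cdot> ((ep A \<otimes> ee A) \<cdot> ru' A) = ((p \<otimes> q) \<cdot> (ep A \<otimes> ee A)) \<cdot> ru' A"
    by (rule assoc[symmetric]) (use assms in simp_all)
  also have "(p \<otimes> q) \<cdot> ((ee A \<otimes> ep A) \<cdot> lu' A) = ((p \<otimes> q) \<cdot> (ee A \<otimes> ep A)) \<cdot> lu' A"
    by (rule assoc[symmetric]) (use assms in simp_all)
  finally show ?thesis using assms by (simp add: ten_cmp)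
qed

lemma nabla_ctx: "arr x \<Longrightarrow> cd x = bo A \<odot> bo A \<Longrightarrow> x \<cdot> nabla C M A \<cdot> ep A = x \<cdot> hh A"
  by (simp add: assoc nabla_ep)

lemma unit_l: "(unitm C M A \<otimes> ii (bo A)) \<cdot> nabla C M A = lu' (bo A)"
proof (rule uniq[where w = "tw mK (dl A) K (bo A)" and B = A])
  have "cmor (tw mK (dl A) K (bo A)) (om A A) (unitm C M A \<otimes> ii (bo A))"
    using cmor_ten[of "unitm C M A" "ii (bo A)" mK "dl A" "dl A" "dl A"] cmor_u cmor_id[of "dl A" "bo A"]
    by (simp add: tw_def)
  then show "cmor (tw mK (dl A) K (bo A)) (dl A) ((unitm C M A \<otimes> ii (bo A)) \<cdot> nabla C M A)"
    using cmor_nabla[of A] by (intro cmor_cmp[where v="om A A"]) simp_all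
  show "cmor (tw mK (dl A) K (bo A)) (dl A) (lu' (bo A))"
    using cmor_lu[of "dl A" "bo A"] by simp
  have "(unitm C M A \<otimes> ii (bo A)) \<cdot> nabla C M A \<cdot> ep A = (unitm C M A \<otimes> ii (bo A)) \<cdot> hh A"
    by (simp add: nabla_ctx)
  also have "\<dots> = ((z K A \<otimes> ee A) \<cdot> ru' A) \<oplus> ((ii K \<otimes> ep A) \<cdot> lu' A)"
    by (simp add: hh_ten u_ep)
  also have "\<dots> = lu' (bo A) \<cdot> ep A" using lu_nat[of "ep A"] by simp
  finally show "(unitm C M A \<otimes> ii (bo A)) \<cdot> nabla C M A \<cdot> ep A = lu' (bo A) \<cdot> ep A" .
qed (simp_all add: tw_def)

lemma unit_r: "(ii (bo A) \<otimes> unitm C M A) \<cdot> nabla C M A = ru' (bo A)"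
proof (rule uniq[where w = "tw (dl A) mK (bo A) K" and B = A])
  have "cmor (tw (dl A) mK (bo A) K) (om A A) (ii (bo A) \<otimes> unitm C M A)"
    using cmor_ten[of "ii (bo A)" "unitm C M A" "dl A" mK "dl A" "dl A"] cmor_u cmor_id[of "dl A" "bo A"]
    by (simp add: tw_def)
  then show "cmor (tw (dl A) mK (bo A) K) (dl A) ((ii (bo A) \<otimes> unitm C M A) \<cdot> nabla C M A)"
    using cmor_nabla[of A] by (intro cmor_cmp[where v="om A A"]) simp_all
  show "cmor (tw (dl A) mK (bo A) K) (dl A) (ru' (bo A))"
    using cmor_ru[of "dl A" "bo A"] by simp
  have "(ii (bo A) \<otimes> unitm C M A) \<cdot> nabla C M A \<cdot> ep A = (ii (bo A) \<otimes> unitm C M A) \<cdot> hh A"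
    by (simp add: nabla_ctx)
  also have "\<dots> = ((ep A \<otimes> ii K) \<cdot> ru' A) \<oplus> ((ee A \<otimes> z K A) \<cdot> lu' A)"
    by (simp add: hh_ten u_ep)
  also have "\<dots> = ru' (bo A) \<cdot> ep A" using ru_nat[of "ep A"] by simp
  finally show "(ii (bo A) \<otimes> unitm C M A) \<cdot> nabla C M A \<cdot> ep A = ru' (bo A) \<cdot> ep A" .
qed (simp_all add: tw_def)


lemma tl_gen:
  assumes "arr a" "arr b" "arr c" "arr r" "arr t" "dm r = cd a \<odot> cd b" "dm t = cd r \<odot> cd c"
  shows "(((a \<otimes> b) \<cdot> r) \<otimes> c) \<cdot> t = ((a \<otimes> b) \<otimes> c) \<cdot> ((r \<otimes> ii (cd c)) \<cdot> t)"
proof -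
  have "((a \<otimes> b) \<cdot> r) \<otimes> c = ((a \<otimes> b) \<cdot> r) \<otimes> (c \<cdot> ii (cd c))" using assms by simp
  also have "\<dots> = ((a \<otimes> b) \<otimes> c) \<cdot> (r \<otimes> ii (cd c))" using assms by (intro ten_cmp) simp_all
  finally have e: "((a \<otimes> b) \<cdot> r) \<otimes> c = ((a \<otimes> b) \<otimes> c) \<cdot> (r \<otimes> ii (cd c))" .
  show ?thesis unfolding e using assms by (intro assoc) simp_all
qed

lemma sl_gen:
  assumes "arr a" "arr b" "arr c" "arr r" "arr t" "dm r = cd b \<odot> cd c" "dm t = cd a \<odot> cd r"
  shows "as (dm a) (dm b) (dm c) \<cdot> ((a \<otimes> ((b \<otimes> c) \<cdot> r)) \<cdot> t)
       = ((a \<otimes> b) \<otimes> c) \<cdot> (as (cd a) (cd b) (cd c) \<cdot> ((ii (cd a) \<otimes> r) \<cdot> t))"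
proof -
  have "a \<otimes> ((b \<otimes> c) \<cdot> r) = (a \<cdot> ii (cd a)) \<otimes> ((b \<otimes> c) \<cdot> r)" using assms by simp
  also have "\<dots> = (a \<otimes> (b \<otimes> c)) \<cdot> (ii (cd a) \<otimes> r)" using assms by (intro ten_cmp) simp_all
  finally have e: "a \<otimes> ((b \<otimes> c) \<cdot> r) = (a \<otimes> (b \<otimes> c)) \<cdot> (ii (cd a) \<otimes> r)" .
  have "as (dm a) (dm b) (dm c) \<cdot> ((a \<otimes> ((b \<otimes> c) \<cdot> r)) \<cdot> t)
      = (as (dm a) (dm b) (dm c) \<cdot> (a \<otimes> (b \<otimes> c))) \<cdot> ((ii (cd a) \<otimes> r) \<cdot> t)"
    unfolding e using assms by (simp add: assoc)
  also have "\<dots> = (((a \<otimes> b) \<otimes> c) \<cdot> as (cd a) (cd b) (cd c)) \<cdot> ((ii (cd a) \<otimes> r) \<cdot> t)"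
    using assms as_nat[of a b c] by simp
  also have "\<dots> = ((a \<otimes> b) \<otimes> c) \<cdot> (as (cd a) (cd b) (cd c) \<cdot> ((ii (cd a) \<otimes> r) \<cdot> t))"
    using assms by (intro assoc) simp_all
  finally show ?thesis .
qed

lemma nabla_assoc:
  "(nabla C M A \<otimes> ii (bo A)) \<cdot> nabla C M A = as (bo A) (bo A) (bo A) \<cdot> (ii (bo A) \<otimes> nabla C M A) \<cdot> nabla C M A"
  (is "?L = ?R")
proof (rule uniq[where w = "tw (om A A) (dl A) (bo A \<odot> bo A) (bo A)" and B = A])
  have "cmor (tw (om A A) (dl A) (bo A \<odot> bo A) (bo A)) (om A A) (nabla C M A \<otimes> ii (bo A))"
    using cmor_ten[of "nabla C M A" "ii (bo A)" "om A A" "dl A" "dl A" "dl A"] cmor_nabla[of A]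
      cmor_id[of "dl A" "bo A"] by (simp add: tw_def)
  then show "cmor (tw (om A A) (dl A) (bo A \<odot> bo A) (bo A)) (dl A) ?L"
    using cmor_nabla[of A] by (intro cmor_cmp[where v="om A A"]) simp_all
  have c1: "cmor (tw (om A A) (dl A) (bo A \<odot> bo A) (bo A)) (tw (dl A) (om A A) (bo A) (bo A \<odot> bo A)) (as (bo A) (bo A) (bo A))"
    using cmor_as[of "dl A" "dl A" "dl A" "bo A" "bo A" "bo A"] by simp
  have c2: "cmor (tw (dl A) (om A A) (bo A) (bo A \<odot> bo A)) (om A A) (ii (bo A) \<otimes> nabla C M A)"
    using cmor_ten[of "ii (bo A)" "nabla C M A" "dl A" "om A A" "dl A" "dl A"] cmor_nabla[of A]
      cmor_id[of "dl A" "bo A"] by (simp add: tw_def)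
  have "cmor (tw (om A A) (dl A) (bo A \<odot> bo A) (bo A)) (om A A) (as (bo A) (bo A) (bo A) \<cdot> (ii (bo A) \<otimes> nabla C M A))"
    using c1 c2 by (intro cmor_cmp[where v="tw (dl A) (om A A) (bo A) (bo A \<odot> bo A)"]) simp_all
  then show "cmor (tw (om A A) (dl A) (bo A \<odot> bo A) (bo A)) (dl A) ?R"
    using cmor_nabla[of A] by (rule cmor_cmp[where v="om A A", rotated -2]) simp_all
  define t1 where "t1 = ((((ep A \<otimes> ee A) \<cdot> ru' A) \<otimes> ee A) \<cdot> ru' A)"
  define t2 where "t2 = ((((ee A \<otimes> ep A) \<cdot> lu' A) \<otimes> ee A) \<cdot> ru' A)"
  define t3 where "t3 = ((((ee A \<otimes> ee A) \<cdot> lu' K) \<otimes> ep A) \<cdot> lu' A)"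
  define s1 where "s1 = as (bo A) (bo A) (bo A) \<cdot> ((ep A \<otimes> ((ee A \<otimes> ee A) \<cdot> lu' K)) \<cdot> ru' A)"
  define s2 where "s2 = as (bo A) (bo A) (bo A) \<cdot> ((ee A \<otimes> ((ep A \<otimes> ee A) \<cdot> ru' A)) \<cdot> lu' A)"
  define s3 where "s3 = as (bo A) (bo A) (bo A) \<cdot> ((ee A \<otimes> ((ee A \<otimes> ep A) \<cdot> lu' A)) \<cdot> lu' A)"
  have L: "?L \<cdot> ep A = (t1 \<oplus> t2) \<oplus> t3"
  proof -
    have "?L \<cdot> ep A = (nabla C M A \<otimes> ii (bo A)) \<cdot> hh A" by (simp add: nabla_ctx)
    also have "\<dots> = ((hh A \<otimes> ee A) \<cdot> ru' A) \<oplus> ((((ee A \<otimes> ee A) \<cdot> lu' K) \<otimes> ep A) \<cdot> lu' A)"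
      by (simp add: hh_ten nabla_ep nabla_e)
    also have "(hh A \<otimes> ee A) \<cdot> ru' A = t1 \<oplus> t2"
      unfolding hh_def t1_def t2_def by (simp add: add_ten add_cmp)
    finally show ?thesis unfolding t3_def .
  qed
  have R: "?R \<cdot> ep A = s1 \<oplus> (s2 \<oplus> s3)"
  proof -
    have "?R \<cdot> ep A = (as (bo A) (bo A) (bo A) \<cdot> (ii (bo A) \<otimes> nabla C M A)) \<cdot> hh A" by (simp add: nabla_ctx)
    also have "\<dots> = as (bo A) (bo A) (bo A) \<cdot> ((ii (bo A) \<otimes> nabla C M A) \<cdot> hh A)" by (simp add: assoc)
    also have "(ii (bo A) \<otimes> nabla C M A) \<cdot> hh A =
       ((ep A \<otimes> ((ee A \<otimes> ee A) \<cdot> lu' K)) \<cdot> ru' A) \<oplus> ((ee A \<otimes> hh A) \<cdot> lu' A)"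
      by (simp add: hh_ten nabla_ep nabla_e)
    also have "(ee A \<otimes> hh A) \<cdot> lu' A = ((ee A \<otimes> ((ep A \<otimes> ee A) \<cdot> ru' A)) \<cdot> lu' A) \<oplus> ((ee A \<otimes> ((ee A \<otimes> ep A) \<cdot> lu' A)) \<cdot> lu' A)"
      unfolding hh_def by (simp add: ten_add add_cmp)
    finally show ?thesis unfolding s1_def s2_def s3_def by (simp add: cmp_add)
  qed
  have e1: "t1 = s1"
  proof -
    have "t1 = ((ep A \<otimes> ee A) \<otimes> ee A) \<cdot> ((ru' A \<otimes> ii K) \<cdot> ru' A)"
      unfolding t1_def by (subst tl_gen) simp_all
    also have "\<dots> = ((ep A \<otimes> ee A) \<otimes> ee A) \<cdot> ((as A K K \<cdot> (ii A \<otimes> lu' K)) \<cdot> ru' A)"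
      by (simp add: triangle)
    also have "\<dots> = ((ep A \<otimes> ee A) \<otimes> ee A) \<cdot> (as A K K \<cdot> ((ii A \<otimes> lu' K) \<cdot> ru' A))"
      by (simp add: assoc)
    also have "\<dots> = s1" unfolding s1_def using sl_gen[of "ep A" "ee A" "ee A" "lu' K" "ru' A"] by simp
    finally show ?thesis .
  qed
  have e2: "t2 = s2"
  proof -
    have "t2 = ((ee A \<otimes> ep A) \<otimes> ee A) \<cdot> ((lu' A \<otimes> ii K) \<cdot> ru' A)"
      unfolding t2_def by (subst tl_gen) simp_all
    also have "\<dots> = ((ee A \<otimes> ep A) \<otimes> ee A) \<cdot> ((as K A K \<cdot> lu' (A \<odot> K)) \<cdot> ru' A)"
      by (simp add: kelly)
    also have "\<dots> = ((ee A \<otimes> ep A) \<otimes> ee A) \<cdot> (as K A K \<cdot> (lu' (A \<odot> K) \<cdot> ru' A))"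
      by (simp add: assoc)
    also have "\<dots> = ((ee A \<otimes> ep A) \<otimes> ee A) \<cdot> (as K A K \<cdot> ((ii K \<otimes> ru' A) \<cdot> lu' A))"
      using lu_nat[of "ru' A"] by simp
    also have "\<dots> = s2" unfolding s2_def using sl_gen[of "ee A" "ep A" "ee A" "ru' A" "lu' A"] by simp
    finally show ?thesis .
  qed
  have e3: "t3 = s3"
  proof -
    have "t3 = ((ee A \<otimes> ee A) \<otimes> ep A) \<cdot> ((lu' K \<otimes> ii A) \<cdot> lu' A)"
      unfolding t3_def by (subst tl_gen) simp_all
    also have "\<dots> = ((ee A \<otimes> ee A) \<otimes> ep A) \<cdot> ((as K K A \<cdot> lu' (K \<odot> A)) \<cdot> lu' A)"
      by (simp add: kelly)
    also have "\<dots> = ((ee A \<otimes> ee A) \<otimes> ep A) \<cdot> (as K K A \<cdot> (lu' (K \<odot> A) \<cdot> lu' A))"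
      by (simp add: assoc)
    also have "\<dots> = ((ee A \<otimes> ee A) \<otimes> ep A) \<cdot> (as K K A \<cdot> ((ii K \<otimes> lu' A) \<cdot> lu' A))"
      using lu_nat[of "lu' A"] by simp
    also have "\<dots> = s3" unfolding s3_def using sl_gen[of "ee A" "ee A" "ep A" "lu' A" "lu' A"] by simp
    finally show ?thesis .
  qed
  have ty: "arr t1" "dm t1 = (bo A \<odot> bo A) \<odot> bo A" "cd t1 = A"
           "arr t2" "dm t2 = (bo A \<odot> bo A) \<odot> bo A" "cd t2 = A"
           "arr t3" "dm t3 = (bo A \<odot> bo A) \<odot> bo A" "cd t3 = A"
    unfolding t1_def t2_def t3_def by simp_all
  show "?L \<cdot> ep A = ?R \<cdot> ep A" unfolding L R e1[symmetric] e2[symmetric] e3[symmetric]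
    using ty by (simp add: add_assoc)
qed (simp_all add: tw_def)


lemma compat: "nabla C M A \<cdot> D A = (D A \<otimes> D A) \<cdot> interchange C (bo A) (bo A) (bo A) (bo A) \<cdot> (nabla C M A \<otimes> nabla C M A)"
proof -
  let ?d = "dl A \<otimes> dl A" and ?m = "mm (bo A) (bo A)" and ?b = "bm (hh A)"
  let ?I' = "interchange C (bo (bo A)) (bo (bo A)) (bo (bo A)) (bo (bo A))"
  let ?I = "interchange C (bo A) (bo A) (bo A) (bo A)"
  have dn: "?b \<cdot> D A = D (bo A \<odot> bo A) \<cdot> (?b \<otimes> ?b)" using D_nat[of "hh A"] by simp
  have md: "?m \<cdot> D (bo A \<odot> bo A) = ((D (bo A) \<otimes> D (bo A)) \<cdot> ?I') \<cdot> (?m \<otimes> ?m)" using mm_D[of "bo A" "bo A"] .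
  have a: "?d \<cdot> (D (bo A) \<otimes> D (bo A)) = (D A \<otimes> D A) \<cdot> (?d \<otimes> ?d)"
    by (simp add: ten_cmp[symmetric] dl_D)
  have b: "(?d \<otimes> ?d) \<cdot> ?I' = ?I \<cdot> ((dl A \<otimes> dl A) \<otimes> (dl A \<otimes> dl A))"
    using I_nat[of "dl A" "dl A" "dl A" "dl A"] by simp
  have c: "(?d \<otimes> ?d) \<cdot> ((?m \<otimes> ?m) \<cdot> (?b \<otimes> ?b)) = nabla C M A \<otimes> nabla C M A"
  proof -
    have "(?d \<otimes> ?d) \<cdot> ((?m \<otimes> ?m) \<cdot> (?b \<otimes> ?b)) = ((?d \<otimes> ?d) \<cdot> (?m \<otimes> ?m)) \<cdot> (?b \<otimes> ?b)"
      by (rule assoc[symmetric]) simp_all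
    also have "\<dots> = ((?d \<cdot> ?m) \<otimes> (?d \<cdot> ?m)) \<cdot> (?b \<otimes> ?b)" by (simp add: ten_cmp)
    also have "\<dots> = (?d \<cdot> ?m \<cdot> ?b) \<otimes> (?d \<cdot> ?m \<cdot> ?b)" by (simp add: ten_cmp)
    finally show ?thesis unfolding nabla_eq tw_def .
  qed
  have "nabla C M A \<cdot> D A = ?d \<cdot> (?m \<cdot> (?b \<cdot> D A))" unfolding nabla_eq tw_def by (simp add: assoc)
  also have "\<dots> = ?d \<cdot> (?m \<cdot> (D (bo A \<odot> bo A) \<cdot> (?b \<otimes> ?b)))" by (simp only: dn)
  also have "\<dots> = ?d \<cdot> (((D (bo A) \<otimes> D (bo A)) \<cdot> ?I') \<cdot> ((?m \<otimes> ?m) \<cdot> (?b \<otimes> ?b)))"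
    using ctx[OF md] by simp
  also have "\<dots> = (?d \<cdot> (D (bo A) \<otimes> D (bo A))) \<cdot> (?I' \<cdot> ((?m \<otimes> ?m) \<cdot> (?b \<otimes> ?b)))"
    by (simp add: assoc)
  also have "\<dots> = ((D A \<otimes> D A) \<cdot> (?d \<otimes> ?d)) \<cdot> (?I' \<cdot> ((?m \<otimes> ?m) \<cdot> (?b \<otimes> ?b)))" by (simp only: a)
  also have "\<dots> = (D A \<otimes> D A) \<cdot> (((?d \<otimes> ?d) \<cdot> ?I') \<cdot> ((?m \<otimes> ?m) \<cdot> (?b \<otimes> ?b)))" by (simp add: assoc)
  also have "\<dots> = (D A \<otimes> D A) \<cdot> ((?I \<cdot> (?d \<otimes> ?d)) \<cdot> ((?m \<otimes> ?m) \<cdot> (?b \<otimes> ?b)))" by (simp only: b)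
  also have "\<dots> = (D A \<otimes> D A) \<cdot> (?I \<cdot> ((?d \<otimes> ?d) \<cdot> ((?m \<otimes> ?m) \<cdot> (?b \<otimes> ?b))))"
    by (subst assoc) simp_all
  also have "\<dots> = (D A \<otimes> D A) \<cdot> (?I \<cdot> (nabla C M A \<otimes> nabla C M A))" by (simp only: c)
  also have "\<dots> = (D A \<otimes> D A) \<cdot> ?I \<cdot> (nabla C M A \<otimes> nabla C M A)" by (simp add: assoc)
  finally show ?thesis .
qed

lemma u_D: "unitm C M A \<cdot> D A = iv (ru' K) \<cdot> (unitm C M A \<otimes> unitm C M A)"
proof -
  have "unitm C M A \<cdot> D A = mK \<cdot> (bm (z K A) \<cdot> D A)" unfolding unitm_def by (simp add: assoc)
  also have "\<dots> = mK \<cdot> (D K \<cdot> (bm (z K A) \<otimes> bm (z K A)))" using D_nat[of "z K A"] by simp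
  also have "\<dots> = (mK \<cdot> D K) \<cdot> (bm (z K A) \<otimes> bm (z K A))" by (simp add: assoc)
  also have "\<dots> = iv (ru' K) \<cdot> ((mK \<otimes> mK) \<cdot> (bm (z K A) \<otimes> bm (z K A)))" by (simp add: mK_D assoc)
  also have "\<dots> = iv (ru' K) \<cdot> (unitm C M A \<otimes> unitm C M A)" unfolding unitm_def by (simp add: ten_cmp)
  finally show ?thesis .
qed

lemma Dr_gen: assumes "arr f" "dm f = bo A" shows "D A \<cdot> ((f \<otimes> ee A) \<cdot> ru' (cd f)) = f"
proof -
  have "(f \<otimes> ee A) = (ii (bo A) \<otimes> ee A) \<cdot> (f \<otimes> ii K)" using assms by (simp add: ten_cmp[symmetric])
  then have "D A \<cdot> ((f \<otimes> ee A) \<cdot> ru' (cd f)) = D A \<cdot> ((ii (bo A) \<otimes> ee A) \<cdot> ((f \<otimes> ii K) \<cdot> ru' (cd f)))"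
    using assms by (simp add: assoc)
  also have "\<dots> = D A \<cdot> ((ii (bo A) \<otimes> ee A) \<cdot> (ru' (bo A) \<cdot> f))" using assms ru_nat[of f] by simp
  also have "\<dots> = (D A \<cdot> (ii (bo A) \<otimes> ee A) \<cdot> ru' (bo A)) \<cdot> f" using assms by (simp add: assoc)
  also have "\<dots> = f" using assms by (simp add: D_r)
  finally show ?thesis .
qed

lemma Dl_gen: assumes "arr f" "dm f = bo A" shows "D A \<cdot> ((ee A \<otimes> f) \<cdot> lu' (cd f)) = f"
proof -
  have "(ee A \<otimes> f) = (ee A \<otimes> ii (bo A)) \<cdot> (ii K \<otimes> f)" using assms by (simp add: ten_cmp[symmetric])
  then have "D A \<cdot> ((ee A \<otimes> f) \<cdot> lu' (cd f)) = D A \<cdot> ((ee A \<otimes> ii (bo A)) \<cdot> ((ii K \<otimes> f) \<cdot> lu' (cd f)))"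
    using assms by (simp add: assoc)
  also have "\<dots> = D A \<cdot> ((ee A \<otimes> ii (bo A)) \<cdot> (lu' (bo A) \<cdot> f))" using assms lu_nat[of f] by simp
  also have "\<dots> = (D A \<cdot> (ee A \<otimes> ii (bo A)) \<cdot> lu' (bo A)) \<cdot> f" using assms by (simp add: assoc)
  also have "\<dots> = f" using assms by (simp add: D_l)
  finally show ?thesis .
qed


lemma cmor_S: "arr n \<Longrightarrow> dm n = A \<Longrightarrow> cd n = A \<Longrightarrow> cmor (om A A) (om A A) (ii (bo A) \<otimes> bm n)"
  using cmor_ten[of "ii (bo A)" "bm n" "dl A" "dl A" "dl A" "dl A"] cmor_id[of "dl A" "bo A"] cmor_bm[of n]
  by (simp add: tw_def)
lemma cmor_S': "arr n \<Longrightarrow> dm n = A \<Longrightarrow> cd n = A \<Longrightarrow> cmor (om A A) (om A A) (bm n \<otimes> ii (bo A))"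
  using cmor_ten[of "bm n" "ii (bo A)" "dl A" "dl A" "dl A" "dl A"] cmor_id[of "dl A" "bo A"] cmor_bm[of n]
  by (simp add: tw_def)

lemma cmor_eu: "cmor (dl A) (dl A) (ee A \<cdot> unitm C M A)"
  using cmor_e[of A] cmor_u[of A] by (intro cmor_cmp[where v=mK]) simp_all

lemma eu_ep: "ee A \<cdot> unitm C M A \<cdot> ep A = z (bo A) A"
  by (simp add: assoc u_ep)

lemma antipode_r:
  assumes n: "arr n" "dm n = A" "cd n = A" "ii A \<oplus> n = z A A"
  shows "D A \<cdot> (ii (bo A) \<otimes> bm n) \<cdot> nabla C M A = ee A \<cdot> unitm C M A"
proof (rule uniq[where w = "dl A" and B = A])
  have "cmor (dl A) (om A A) (D A \<cdot> (ii (bo A) \<otimes> bm n))"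
    using cmor_D[of A] cmor_S[OF n(1-3)] n by (intro cmor_cmp[where v="om A A"]) simp_all
  then show "cmor (dl A) (dl A) (D A \<cdot> (ii (bo A) \<otimes> bm n) \<cdot> nabla C M A)"
    using cmor_nabla[of A] by (rule cmor_cmp[where v="om A A", rotated -2]) (use n in simp_all)
  show "cmor (dl A) (dl A) (ee A \<cdot> unitm C M A)" by (rule cmor_eu)
  have "D A \<cdot> (ii (bo A) \<otimes> bm n) \<cdot> nabla C M A \<cdot> ep A = D A \<cdot> ((ii (bo A) \<otimes> bm n) \<cdot> hh A)"
    using n by (simp add: assoc nabla_ep)
  also have "(ii (bo A) \<otimes> bm n) \<cdot> hh A = ((ep A \<otimes> ee A) \<cdot> ru' A) \<oplus> ((ee A \<otimes> (ep A \<cdot> n)) \<cdot> lu' A)"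
    using n ep_nat[of n] by (simp add: hh_ten)
  also have "D A \<cdot> (((ep A \<otimes> ee A) \<cdot> ru' A) \<oplus> ((ee A \<otimes> (ep A \<cdot> n)) \<cdot> lu' A))
     = (D A \<cdot> ((ep A \<otimes> ee A) \<cdot> ru' A)) \<oplus> (D A \<cdot> ((ee A \<otimes> (ep A \<cdot> n)) \<cdot> lu' A))"
    using n by (simp add: cmp_add)
  also have "\<dots> = ep A \<oplus> (ep A \<cdot> n)" using n Dr_gen[of "ep A" A] Dl_gen[of "ep A \<cdot> n" A] by simp
  also have "\<dots> = ep A \<cdot> (ii A \<oplus> n)" using n(1-3) by (simp add: cmp_add)
  also have "\<dots> = z (bo A) A" using n by simp
  finally show "D A \<cdot> (ii (bo A) \<otimes> bm n) \<cdot> nabla C M A \<cdot> ep A = ee A \<cdot> unitm C M A \<cdot> ep A"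
    by (simp add: eu_ep)
qed (use n in simp_all)

lemma antipode_l:
  assumes n: "arr n" "dm n = A" "cd n = A" "ii A \<oplus> n = z A A"
  shows "D A \<cdot> (bm n \<otimes> ii (bo A)) \<cdot> nabla C M A = ee A \<cdot> unitm C M A"
proof (rule uniq[where w = "dl A" and B = A])
  have "cmor (dl A) (om A A) (D A \<cdot> (bm n \<otimes> ii (bo A)))"
    using cmor_D[of A] cmor_S'[OF n(1-3)] n by (intro cmor_cmp[where v="om A A"]) simp_all
  then show "cmor (dl A) (dl A) (D A \<cdot> (bm n \<otimes> ii (bo A)) \<cdot> nabla C M A)"
    using cmor_nabla[of A] by (rule cmor_cmp[where v="om A A", rotated -2]) (use n in simp_all)
  show "cmor (dl A) (dl A) (ee A \<cdot> unitm C M A)" by (rule cmor_eu)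
  have "D A \<cdot> (bm n \<otimes> ii (bo A)) \<cdot> nabla C M A \<cdot> ep A = D A \<cdot> ((bm n \<otimes> ii (bo A)) \<cdot> hh A)"
    using n by (simp add: assoc nabla_ep)
  also have "(bm n \<otimes> ii (bo A)) \<cdot> hh A = (((ep A \<cdot> n) \<otimes> ee A) \<cdot> ru' A) \<oplus> ((ee A \<otimes> ep A) \<cdot> lu' A)"
    using n ep_nat[of n] by (simp add: hh_ten)
  also have "D A \<cdot> ((((ep A \<cdot> n) \<otimes> ee A) \<cdot> ru' A) \<oplus> ((ee A \<otimes> ep A) \<cdot> lu' A))
     = (D A \<cdot> (((ep A \<cdot> n) \<otimes> ee A) \<cdot> ru' A)) \<oplus> (D A \<cdot> ((ee A \<otimes> ep A) \<cdot> lu' A))"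
    using n by (simp add: cmp_add)
  also have "\<dots> = (ep A \<cdot> n) \<oplus> ep A" using n Dr_gen[of "ep A \<cdot> n" A] Dl_gen[of "ep A" A] by simp
  also have "\<dots> = ep A \<oplus> (ep A \<cdot> n)" using n(1-3) by (intro add_comm) simp_all
  also have "\<dots> = ep A \<cdot> (ii A \<oplus> n)" using n(1-3) by (simp add: cmp_add)
  also have "\<dots> = z (bo A) A" using n by simp
  finally show "D A \<cdot> (bm n \<otimes> ii (bo A)) \<cdot> nabla C M A \<cdot> ep A = ee A \<cdot> unitm C M A \<cdot> ep A"
    by (simp add: eu_ep)
qed (use n in simp_all)


lemma D_coassoc: "D A \<cdot> (D A \<otimes> ii (bo A)) \<cdot> as (bo A) (bo A) (bo A) = D A \<cdot> (ii (bo A) \<otimes> D A)"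
  using MC21 by blast
lemma D_cocomm: "D A \<cdot> sy (bo A) (bo A) = D A" using MC24 by blast

lemma neg_unique:
  assumes "arr x" "arr y" "arr y'" "dm y = dm x" "cd y = cd x" "dm y' = dm x" "cd y' = cd x"
    "x \<oplus> y = z (dm x) (cd x)" "x \<oplus> y' = z (dm x) (cd x)"
  shows "y = y'"
proof -
  have "y = y \<oplus> (x \<oplus> y')" using assms by simp
  also have "\<dots> = (y \<oplus> x) \<oplus> y'" using assms by (simp add: add_assoc)
  also have "y \<oplus> x = x \<oplus> y" using assms by (intro add_comm) simp_all
  also have "(x \<oplus> y) \<oplus> y' = y'" using assms by simp
  finally show ?thesis .
qed

lemma neg_to_hopf:
  assumes hn: "has_negatives C"
  shows "\<exists>S :: 'o \<Rightarrow> 'm.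
            (\<forall>A B f. f \<in> hom C A B \<longrightarrow>
                cmp C (bangm M f) (S B) = cmp C (S A) (bangm M f)) \<and>
            (\<forall>A. cocommutative_hopf_monoid C (bang M A) (nabla C M A) (unitm C M A)
                   (cop M A) (cou M A) (S A))"
proof -
  define N where "N A = (SOME g. g \<in> hom C A A \<and> ii A \<oplus> g = z A A)" for A
  have N: "arr (N A) \<and> dm (N A) = A \<and> cd (N A) = A \<and> ii A \<oplus> N A = z A A" for A
  proof -
    have "\<exists>g. g \<in> hom C A A \<and> ii A \<oplus> g = z A A"
      using hn unfolding has_negatives_def by (metis arr_id cd_id dm_id hom_iff)
    then have "N A \<in> hom C A A \<and> ii A \<oplus> N A = z A A" unfolding N_def by (rule someI_ex)
    then show ?thesis by (simp add: hom_iff)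
  qed
  have nat: "bm f \<cdot> bm (N B) = bm (N A) \<cdot> bm f" if f: "f \<in> hom C A B" for A B f
  proof -
    have f': "arr f" "dm f = A" "cd f = B" using f by (auto simp: hom_iff)
    have "f \<cdot> N B = N A \<cdot> f"
    proof (rule neg_unique[of f])
      have Nb: "arr (N B)" "dm (N B) = B" "cd (N B) = B" using N[of B] by auto
      have "f \<oplus> (f \<cdot> N B) = f \<cdot> (ii B \<oplus> N B)" using f' Nb by (simp add: cmp_add)
      also have "\<dots> = z (dm f) (cd f)" using f' N[of B] by simp
      finally show "f \<oplus> (f \<cdot> N B) = z (dm f) (cd f)" .
      have Na: "arr (N A)" "dm (N A) = A" "cd (N A) = A" using N[of A] by auto
      have "f \<oplus> (N A \<cdot> f) = (ii A \<oplus> N A) \<cdot> f" using f' Na by (simp add: add_cmp)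
      also have "\<dots> = z (dm f) (cd f)" using f' N[of A] by simp
      finally show "f \<oplus> (N A \<cdot> f) = z (dm f) (cd f)" .
    qed (use f' N in simp_all)
    then show ?thesis using f' N by (simp add: bm_cmp[symmetric])
  qed
  have hopf: "cocommutative_hopf_monoid C (bo A) (nabla C M A) (unitm C M A) (D A) (ee A) (bm (N A))" for A
    unfolding cocommutative_hopf_monoid_def hopf_monoid_def bimonoid_def hom_iff
    using N[of A] nabla_assoc[of A] unit_l[of A] unit_r[of A] D_coassoc[of A] D_l[of A] D_r[of A]
      compat[of A] u_D[of A] nabla_e[of A] u_e[of A] D_cocomm[of A]
      antipode_r[of "N A" A] antipode_l[of "N A" A]
    by simp
  show ?thesis
    by (rule exI[where x="\<lambda>A. bm (N A)"]) (use nat hopf in blast)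
qed

lemma hopf_to_neg:
  assumes h: "cocommutative_hopf_monoid C (bo K) (nabla C M K) (unitm C M K) (D K) (ee K) S"
  shows "has_negatives C"
proof -
  have S: "arr S" "dm S = bo K" "cd S = bo K"
    and hop: "D K \<cdot> (ii (bo K) \<otimes> S) \<cdot> nabla C M K = ee K \<cdot> unitm C M K"
    using h unfolding cocommutative_hopf_monoid_def hopf_monoid_def hom_iff by auto
  have Se: "S \<cdot> ee K = ee K"
  proof -
    have "D K \<cdot> (ii (bo K) \<otimes> S) \<cdot> nabla C M K \<cdot> ee K = ee K \<cdot> unitm C M K \<cdot> ee K" using hop by simp
    also have "\<dots> = ee K" by (simp add: assoc)
    finally have 1: "D K \<cdot> (ii (bo K) \<otimes> S) \<cdot> nabla C M K \<cdot> ee K = ee K" .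
    have "D K \<cdot> (ii (bo K) \<otimes> S) \<cdot> nabla C M K \<cdot> ee K = D K \<cdot> ((ii (bo K) \<otimes> S) \<cdot> ((ee K \<otimes> ee K) \<cdot> lu' K))"
      using S by (simp add: assoc nabla_e)
    also have "(ii (bo K) \<otimes> S) \<cdot> ((ee K \<otimes> ee K) \<cdot> lu' K) = ((ii (bo K) \<otimes> S) \<cdot> (ee K \<otimes> ee K)) \<cdot> lu' K"
      using S by (intro assoc[symmetric]) simp_all
    also have "\<dots> = (ee K \<otimes> (S \<cdot> ee K)) \<cdot> lu' (cd (S \<cdot> ee K))" using S by (simp add: ten_cmp[symmetric])
    also have "D K \<cdot> \<dots> = S \<cdot> ee K" using S by (intro Dl_gen) simp_all
    finally show ?thesis using 1 by simp
  qed
  define n where "n = mK \<cdot> S \<cdot> ep K"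
  have n_typ: "arr n" "dm n = K" "cd n = K" unfolding n_def using S by simp_all
  define NK where "NK = iv (ru' K) \<cdot> (lu' K \<cdot> n)"
  have NK_typ: "arr NK" "dm NK = K" "cd NK = K" unfolding NK_def using n_typ by simp_all
  have NK: "ii K \<oplus> NK = z K K"
  proof -
    have "mK \<cdot> (D K \<cdot> (ii (bo K) \<otimes> S) \<cdot> nabla C M K) \<cdot> ep K = mK \<cdot> (ee K \<cdot> unitm C M K) \<cdot> ep K"
      using hop by simp
    also have "\<dots> = z K K" by (simp add: assoc u_ep)
    finally have 1: "mK \<cdot> (D K \<cdot> (ii (bo K) \<otimes> S) \<cdot> nabla C M K) \<cdot> ep K = z K K" .
    have "mK \<cdot> (D K \<cdot> (ii (bo K) \<otimes> S) \<cdot> nabla C M K) \<cdot> ep K = (mK \<cdot> D K) \<cdot> ((ii (bo K) \<otimes> S) \<cdot> hh K)"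
      using S by (simp add: assoc nabla_ep)
    also have "\<dots> = iv (ru' K) \<cdot> ((mK \<otimes> mK) \<cdot> ((ii (bo K) \<otimes> S) \<cdot> hh K))" using S by (simp add: mK_D assoc)
    also have "(mK \<otimes> mK) \<cdot> ((ii (bo K) \<otimes> S) \<cdot> hh K) = ((mK \<otimes> mK) \<cdot> (ii (bo K) \<otimes> S)) \<cdot> hh K"
      using S by (intro assoc[symmetric]) simp_all
    also have "(mK \<otimes> mK) \<cdot> (ii (bo K) \<otimes> S) = mK \<otimes> (mK \<cdot> S)" using S by (simp add: ten_cmp[symmetric])
    also have "(mK \<otimes> (mK \<cdot> S)) \<cdot> hh K = (((mK \<cdot> ep K) \<otimes> (mK \<cdot> S \<cdot> ee K)) \<cdot> ru' K) \<oplus> (((mK \<cdot> ee K) \<otimes> (mK \<cdot> S \<cdot> ep K)) \<cdot> lu' K)"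
      using S by (intro hh_ten) simp_all
    also have "mK \<cdot> S \<cdot> ee K = ii K" using S Se by (simp add: assoc)
    also have "(((mK \<cdot> ep K) \<otimes> ii K) \<cdot> ru' K) \<oplus> (((mK \<cdot> ee K) \<otimes> (mK \<cdot> S \<cdot> ep K)) \<cdot> lu' K)
        = ru' K \<oplus> (lu' K \<cdot> n)" unfolding n_def using S lu_nat[of n] n_typ by (simp add: n_def)
    also have "iv (ru' K) \<cdot> (ru' K \<oplus> (lu' K \<cdot> n)) = ii K \<oplus> NK" unfolding NK_def using n_typ by (simp add: cmp_add)
    finally show ?thesis using 1 by simp
  qed
  show ?thesis unfolding has_negatives_def
  proof (intro allI ballI)
    fix A B f assume "f \<in> hom C A B"
    then have f: "arr f" "dm f = A" "cd f = B" by (auto simp: hom_iff)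
    define g where "g = iv (lu' A) \<cdot> ((NK \<otimes> f) \<cdot> lu' B)"
    have g: "g \<in> hom C A B" unfolding g_def hom_iff using f NK_typ by simp
    have "f = iv (lu' A) \<cdot> ((ii K \<otimes> f) \<cdot> lu' B)" using f lu_nat[of f] by (simp flip: assoc)
    then have "f \<oplus> g = iv (lu' A) \<cdot> (((ii K \<otimes> f) \<cdot> lu' B) \<oplus> ((NK \<otimes> f) \<cdot> lu' B))"
      unfolding g_def using f NK_typ by (simp add: cmp_add)
    also have "\<dots> = iv (lu' A) \<cdot> (((ii K \<oplus> NK) \<otimes> f) \<cdot> lu' B)"
      using f NK_typ by (simp add: add_cmp add_ten)
    also have "\<dots> = z A B" using f by (simp add: NK)
    finally show "\<exists>g\<in>hom C A B. f \<oplus> g = z A B" using g by blast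
  qed
qed

end

theorem proposition7p9:
  fixes C :: "('o,'m) asmc" and M :: "('o,'m) mcm"
  assumes "additive_smc C"
    and "monoidal_coalgebra_modality C M"
  shows "(\<exists>S :: 'o \<Rightarrow> 'm.
            (\<forall>A B f. f \<in> hom C A B \<longrightarrow>
                cmp C (bangm M f) (S B) = cmp C (S A) (bangm M f)) \<and>
            (\<forall>A. cocommutative_hopf_monoid C (bang M A) (nabla C M A) (unitm C M A)
                   (cop M A) (cou M A) (S A)))
         \<longleftrightarrow> has_negatives C"
proof -
  interpret amc C M using assms by unfold_locales
  show ?thesis using neg_to_hopf hopf_to_neg by blast
qed

end
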